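(* Assume the setting and Assumptions A1, A2, A3 of the context. Let $n=\ell k+r$ where $\ell,k>1$ are integers and $r\in\{0,1,\dots,k-1\}$. Put $\tilde m=C_1A_1\Phi_{\mathcal C}(k)$, $\tilde\sigma^2=\sigma^2+C_2\Phi_{\mathcal C}(k)$ and $B=A_1^2+A_2$. Then for every $t>0$, \[ \mathbb P\Big(\frac1n\Big\|\sum_{i=1}^nX_i\Big\|\ge t\Big)\le 2\exp\Big(-\frac{\ell\,(t^2-4\tilde m t)}{4\big(\frac{tc}{3}+\tilde\sigma^2B\big)}\Big), \] and equivalently, for every $\nu>0$, \[ \mathbb P\Big(\Big\|\frac1n\sum_{i=1}^nX_i\Big\|\ge 4\tilde m+4\sqrt{\frac{B\tilde\sigma^2\nu}{\ell}}+\frac43\frac{c\nu}{\ell}\Big)\le 2e^{-\nu}. \]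
   Context: Let $(\mathcal B,\|\cdot\|)$ be a separable real Banach space with dual $\mathcal B^\star$ (dual norm $\|\cdot\|_\star$, duality pairing $\langle\cdot,\cdot\rangle$). For $r>0$ let $B(r)$ and $B^\star(r)$ denote the closed balls of radius $r$ centered at $0$ in $\mathcal B$ and $\mathcal B^\star$. Fix $c>0$ and put $\mathcal X=B(c)$. Let $(X_i)_{i\ge1}$ be a stochastic process on a probability space $(\Omega,\mathcal F,\mathbb P)$ with values in $\mathcal X$ which is centered ($\mathbb E X_i=0$ for all $i$, Bochner expectation). Let $\mathcal M_i=\sigma(X_1,\dots,X_i)$. $\mathcal C$-mixing: let $\mathcal C$ be a closed subspace of the Banach space of bounded real-valued functions on $\mathcal X$ (with the supremum norm), let $C(\cdot)$ be a seminorm on $\mathcal C$, and $\mathcal C_1=\{f\in\mathcal C: C(f)\le 1\}$. For integers $k\ge1$ the $\mathcal C$-mixing coefficients are $\Phi_{\mathcal C}(k)=\sup\{\|\mathbb E[\varphi(X_{i+k})\mid\mathcal M_i]-\mathbb E[\varphi(X_{i+k})]\|_{L_\infty(\mathbb P)}:\ \varphi\in\mathcal C_1,\ i\ge1\}$. Gâteaux derivatives: for $f:\mathcal B\to\mathbb R$, $x\in\mathcal B$, $v\in\mathcal B$, $\delta_v f(x)=\frac{d}{dt}\big|_{t=0}f(x+tv)$ when it exists; $\delta_{v,v}f(x)=\frac{d^2}{dt^2}\big|_{t=0}f(x+tv)$ denotes the second Gâteaux differential in direction $v$. Assumption A1: the norm $x\mapsto\|x\|$ is twice Gâteaux differentiable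 at every nonzero $x$ in all directions, and there are constants $A_1\ge1$, $A_2>0$ with $|\delta_v(\|x\|)|\le A_1\|v\|$ and $|\delta_{v,v}(\|x\|)|\le A_2\|v\|^2/\|x\|$ for all $x,v\in\mathcal B$, $x\ne0$. Assumption A2: there are constants $c,\sigma^2>0$ with $\|X_i\|\le c$ a.s. and $\mathbb E\|X_i\|^2\le\sigma^2$ for all $i$. Assumption A3: for each $s\in\mathcal B^\star$ the function $h_{1,s}(x)=\langle s,x\rangle$ (restricted to $\mathcal X$) belongs to $\mathcal C$, the function $h_2(x)=\|x\|^2$ belongs to $\mathcal C$, and $\sup_{s\in B^\star(1)}C(h_{1,s})\le C_1$, $C(h_2)\le C_2$ for constants $C_1,C_2\ge0$. *)

theory Defs
  imports "HOL-Analysis.Analysis" "HOL-Probability.Probability"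
begin

definition gateaux1 :: "('b::real_normed_vector \<Rightarrow> real) \<Rightarrow> 'b \<Rightarrow> 'b \<Rightarrow> real" where
  "gateaux1 f x v = deriv (\<lambda>t. f (x + t *\<^sub>R v)) 0"

definition gateaux2 :: "('b::real_normed_vector \<Rightarrow> real) \<Rightarrow> 'b \<Rightarrow> 'b \<Rightarrow> real" where
  "gateaux2 f x v = deriv (\<lambda>t. deriv (\<lambda>s. f (x + s *\<^sub>R v)) t) 0"

definition twice_gateaux_diff :: "('b::real_normed_vector \<Rightarrow> real) \<Rightarrow> 'b \<Rightarrow> 'b \<Rightarrow> bool" where
  "twice_gateaux_diff f x v \<longleftrightarrow>
     (\<forall>\<^sub>F t in nhds 0. (\<lambda>s. f (x + s *\<^sub>R v)) differentiable (at t)) \<and>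
     (\<lambda>t. deriv (\<lambda>s. f (x + s *\<^sub>R v)) t) differentiable (at 0)"

definition nat_filtr :: "'w measure \<Rightarrow> (nat \<Rightarrow> 'w \<Rightarrow> 'b::topological_space) \<Rightarrow> nat \<Rightarrow> 'w measure" where
  "nat_filtr M X i = sigma (space M)
     {X j -` A \<inter> space M | j A. j \<in> {1..i} \<and> A \<in> sets borel}"

text \<open>C-mixing coefficients (as extended reals; L_infinity norm = essential supremum of the
  absolute value).  Test functions phi range over C_1 = {f in Cset. Cnorm f <= 1}.\<close>

definition C_mixing_coeff ::
  "'w measure \<Rightarrow> (nat \<Rightarrow> 'w \<Rightarrow> 'b::topological_space) \<Rightarrow> ('b \<Rightarrow> real) set \<Rightarrow> (('b \<Rightarrow> real) \<Rightarrow> real)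
     \<Rightarrow> nat \<Rightarrow> ereal" where
  "C_mixing_coeff M X Cset Cnorm k =
     (SUP p \<in> {(\<phi>, i). \<phi> \<in> Cset \<and> Cnorm \<phi> \<le> 1 \<and> i \<ge> 1}.
        esssup M (\<lambda>\<omega>. ereal \<bar>real_cond_exp M (nat_filtr M X (snd p)) (\<lambda>\<omega>'. fst p (X (snd p + k) \<omega>')) \<omega>
                      - (\<integral>\<omega>'. fst p (X (snd p + k) \<omega>') \<partial>M)\<bar>))"

end

theory Submission
  imports Defs
begin

lemma sinh_ge_self: "0 \<le> (z::real) \<Longrightarrow> z \<le> sinh z"
proof (cases "z = 0")
  case False
  assume z: "0 \<le> z"
  with False have "0 < z" by simp
  have d: "\<And>x. DERIV sinh x :> cosh x" by (auto intro!: derivative_eq_intros)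
  obtain \<xi> where "0 < \<xi>" "\<xi> < z" "sinh z - sinh 0 = (z - 0) * cosh \<xi>"
    using MVT2[of 0 z sinh cosh] d \<open>0 < z\<close> by blast
  moreover have "cosh \<xi> \<ge> 1" by (rule cosh_real_ge_1)
  ultimately show ?thesis using \<open>0 < z\<close> by (simp add: mult_le_cancel_left1)
qed simp

lemma sinh_le_mult_cosh: "0 \<le> (z::real) \<Longrightarrow> sinh z \<le> z * cosh z"
proof (cases "z = 0")
  case False
  assume z: "0 \<le> z"
  with False have "0 < z" by simp
  have d: "\<And>x. DERIV sinh x :> cosh x" by (auto intro!: derivative_eq_intros)
  obtain \<xi> where "0 < \<xi>" "\<xi> < z" "sinh z - sinh 0 = (z - 0) * cosh \<xi>"
    using MVT2[of 0 z sinh cosh] d \<open>0 < z\<close> by blast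
  moreover have "cosh \<xi> \<le> cosh z" using \<open>0 < \<xi>\<close> \<open>\<xi> < z\<close> cosh_real_nonneg_le_iff by simp
  ultimately show ?thesis using \<open>0 < z\<close> by (simp add: mult_le_cancel_left)
qed simp

lemma exp_taylor2: "0 \<le> (a::real) \<Longrightarrow> exp a - 1 - a \<le> a\<^sup>2 * exp a / 2"
proof -
  assume a: "0 \<le> a"
  obtain t where t: "\<bar>t\<bar> \<le> \<bar>a\<bar>" "exp a = (\<Sum>m<2. (a ^ m) / fact m) + (exp t / fact 2) * a ^ 2"
    using Maclaurin_exp_le[of a 2] by blast
  have "exp t \<le> exp a" using t(1) a by simp
  then have "exp t * a\<^sup>2 \<le> exp a * a\<^sup>2" by (simp add: mult_right_mono)
  with t(2) show ?thesis by (simp add: numeral_2_eq_2 field_simps)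
qed

lemma cosh_shift_le: "0 \<le> (a::real) \<Longrightarrow> cosh (y + a) \<le> cosh y + a * sinh y + cosh y * (exp a - 1 - a)"
proof -
  assume a: "0 \<le> a"
  have e: "exp a = cosh a + sinh a" by (simp add: cosh_plus_sinh)
  have "cosh y + a * sinh y + cosh y * (exp a - 1 - a) - cosh (y + a) = (cosh y - sinh y) * (sinh a - a)"
    by (simp add: cosh_add e algebra_simps)
  moreover have "cosh y - sinh y \<ge> 0" using sinh_le_cosh_real[of y] by simp
  moreover have "sinh a - a \<ge> 0" using sinh_ge_self[OF a] by simp
  ultimately show ?thesis by (metis diff_ge_0_iff_ge mult_nonneg_nonneg)
qed

lemma cosh_add_le_exp: "0 \<le> (q::real) \<Longrightarrow> cosh (p + q) \<le> cosh p * exp q"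
proof -
  assume q: "0 \<le> q"
  have "sinh p * sinh q \<le> cosh p * sinh q"
    using sinh_le_cosh_real[of p] q by (simp add: mult_right_mono)
  then have "cosh (p + q) \<le> cosh p * cosh q + cosh p * sinh q" by (simp add: cosh_add)
  also have "\<dots> = cosh p * exp q" by (simp add: distrib_left[symmetric] cosh_plus_sinh)
  finally show ?thesis .
qed


lemma gat_has_deriv:
  assumes "twice_gateaux_diff norm x v"
  shows "((\<lambda>t. norm (x + t *\<^sub>R v)) has_real_derivative gateaux1 norm x v) (at 0)"
proof -
  from assms have "\<forall>\<^sub>F t in nhds 0. (\<lambda>s. norm (x + s *\<^sub>R v)) differentiable (at t)"
    unfolding twice_gateaux_diff_def by blast
  then have "(\<lambda>s. norm (x + s *\<^sub>R v)) differentiable (at 0)"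
    using eventually_nhds_x_imp_x by blast
  then show ?thesis unfolding gateaux1_def using DERIV_deriv_iff_real_differentiable by blast
qed

lemma gat_homog:
  assumes "twice_gateaux_diff norm (x::'b::real_normed_vector) v"
  shows "gateaux1 norm x (a *\<^sub>R v) = a * gateaux1 norm x v"
proof -
  have d: "((\<lambda>t. norm (x + t *\<^sub>R v)) has_real_derivative gateaux1 norm x v) (at (a * 0))"
    using gat_has_deriv[OF assms] by simp
  have "((\<lambda>t. norm (x + (a * t) *\<^sub>R v)) has_real_derivative gateaux1 norm x v * a) (at 0)"
    using DERIV_chain2[where f="\<lambda>t. norm (x + t *\<^sub>R v)" and g="\<lambda>t. a * t" and x=0 and s=UNIV, OF d]
    by (auto intro: derivative_eq_intros)
  then have "((\<lambda>t. norm (x + t *\<^sub>R (a *\<^sub>R v))) has_real_derivative gateaux1 norm x v * a) (at 0)"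
    by (simp add: mult.commute)
  then show ?thesis unfolding gateaux1_def by (simp add: DERIV_imp_deriv mult.commute)
qed

lemma gat_subadd:
  assumes "\<And>v. twice_gateaux_diff norm (x::'b::real_normed_vector) v"
  shows "gateaux1 norm x (v + w) \<le> gateaux1 norm x v + gateaux1 norm x w"
proof -
  let ?f = "\<lambda>u t. norm (x + t *\<^sub>R u)"
  have D: "((\<lambda>t. (?f u t - ?f u 0) / (t - 0)) \<longlongrightarrow> gateaux1 norm x u) (at_right 0)" for u
  proof -
    have "((\<lambda>t. (?f u t - ?f u 0) / (t - 0)) \<longlongrightarrow> gateaux1 norm x u) (at 0)"
      using gat_has_deriv[OF assms[of u]] unfolding has_field_derivative_iff by simp
    then show ?thesis by (rule tendsto_mono[OF at_le, rotated]) simp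
  qed
  have R: "((\<lambda>t. ((?f (2 *\<^sub>R v) t - ?f (2 *\<^sub>R v) 0) / (t - 0) + (?f (2 *\<^sub>R w) t - ?f (2 *\<^sub>R w) 0) / (t - 0)) / 2)
     \<longlongrightarrow> (gateaux1 norm x (2 *\<^sub>R v) + gateaux1 norm x (2 *\<^sub>R w)) / 2) (at_right 0)"
    by (intro tendsto_intros D) simp
  have ev: "\<forall>\<^sub>F t in at_right 0. (?f (v + w) t - ?f (v + w) 0) / (t - 0) \<le>
       ((?f (2 *\<^sub>R v) t - ?f (2 *\<^sub>R v) 0) / (t - 0) + (?f (2 *\<^sub>R w) t - ?f (2 *\<^sub>R w) 0) / (t - 0)) / 2"
  proof (rule eventually_at_rightI[of 0 1])
    fix t :: real assume t: "t \<in> {0<..<1}"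
    have eq: "x + t *\<^sub>R (v + w) = (1/2) *\<^sub>R (x + t *\<^sub>R (2 *\<^sub>R v)) + (1/2) *\<^sub>R (x + t *\<^sub>R (2 *\<^sub>R w))"
      by (simp add: algebra_simps scaleR_add_left[symmetric])
    have "?f (v + w) t \<le> (1/2) * ?f (2 *\<^sub>R v) t + (1/2) * ?f (2 *\<^sub>R w) t"
      unfolding eq by (rule order.trans[OF norm_triangle_ineq]) auto
    then show "(?f (v + w) t - ?f (v + w) 0) / (t - 0) \<le>
       ((?f (2 *\<^sub>R v) t - ?f (2 *\<^sub>R v) 0) / (t - 0) + (?f (2 *\<^sub>R w) t - ?f (2 *\<^sub>R w) 0) / (t - 0)) / 2"
    proof -
      have "(?f (v + w) t - ?f (v + w) 0) / t \<le> (((?f (2 *\<^sub>R v) t - ?f (2 *\<^sub>R v) 0) + (?f (2 *\<^sub>R w) t - ?f (2 *\<^sub>R w) 0)) / 2) / t"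
        using t \<open>?f (v + w) t \<le> _\<close> by (intro divide_right_mono) auto
      then show ?thesis by (simp add: add_divide_distrib diff_divide_distrib mult.commute)
    qed
  qed simp
  have "gateaux1 norm x (v + w) \<le> (gateaux1 norm x (2 *\<^sub>R v) + gateaux1 norm x (2 *\<^sub>R w)) / 2"
    by (rule tendsto_le[OF _ R D ev]) simp
  then show ?thesis using gat_homog[OF assms, of 2 v] gat_homog[OF assms, of 2 w] by simp
qed

lemma gat_linear:
  assumes "\<And>v. twice_gateaux_diff norm (x::'b::real_normed_vector) v"
    and "\<And>v. \<bar>gateaux1 norm x v\<bar> \<le> A * norm v" and "0 \<le> A"
  shows "bounded_linear (gateaux1 norm x)" "onorm (gateaux1 norm x) \<le> A"
proof -
  have add: "gateaux1 norm x (v + w) = gateaux1 norm x v + gateaux1 norm x w" for v w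
  proof -
    have "gateaux1 norm x v = gateaux1 norm x ((v + w) + (-1) *\<^sub>R w)" by simp
    also have "\<dots> \<le> gateaux1 norm x (v + w) + gateaux1 norm x ((-1) *\<^sub>R w)"
      by (rule gat_subadd[OF assms(1)])
    also have "\<dots> = gateaux1 norm x (v + w) - gateaux1 norm x w"
      using gat_homog[OF assms(1), of "-1" w] by simp
    finally show ?thesis using gat_subadd[OF assms(1), of v w] by simp
  qed
  show "bounded_linear (gateaux1 norm x)"
    by (rule bounded_linear_intro[where K = A])
      (auto simp: add gat_homog[OF assms(1)] mult.commute assms(2))
  show "onorm (gateaux1 norm x) \<le> A"
    by (intro onorm_bound assms(3)) (auto intro: order.trans[OF abs_ge_self] assms(2))
qed


lemma deriv_shift_real: "deriv (\<lambda>s. f (s + t)) s' = deriv f (s' + (t::real))"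
  unfolding deriv_def by (simp add: DERIV_shift)

lemma cosh_norm_taylor:
  fixes x w :: "'b::real_normed_vector" and lam A1 A2 :: real
  assumes diff: "\<And>(y::'b) v. y \<noteq> 0 \<Longrightarrow> twice_gateaux_diff norm y v"
    and d1: "\<And>(y::'b) v. y \<noteq> 0 \<Longrightarrow> \<bar>gateaux1 norm y v\<bar> \<le> A1 * norm v"
    and d2: "\<And>(y::'b) v. y \<noteq> 0 \<Longrightarrow> \<bar>gateaux2 norm y v\<bar> \<le> A2 * (norm v)\<^sup>2 / norm y"
    and A1: "1 \<le> A1" and A2: "0 \<le> A2" and lam: "0 \<le> lam"
  shows "cosh (lam * norm (x + w)) \<le> cosh (lam * norm x)
           + lam * sinh (lam * norm x) * (if x = 0 then 0 else gateaux1 norm x w)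
           + (lam\<^sup>2 * (A1\<^sup>2 + A2) * (norm w)\<^sup>2 / 2) * cosh (lam * norm x) * exp (lam * norm w)"
proof (cases "\<exists>t0. x + t0 *\<^sub>R w = 0")
  case True
  then obtain t0 where t0: "x + t0 *\<^sub>R w = 0" by blast
  then have xe: "x = (- t0) *\<^sub>R w" by (simp add: eq_neg_iff_add_eq_0)
  define a where "a = lam * norm w"
  define y where "y = - a * t0"
  have a0: "0 \<le> a" unfolding a_def using lam by simp
  have hx: "cosh (lam * norm x) = cosh y"
    unfolding xe y_def a_def by (simp add: abs_mult)
  have h1: "cosh (lam * norm (x + w)) = cosh (y + a)"
  proof -
    have "x + w = (1 - t0) *\<^sub>R w" unfolding xe by (simp add: algebra_simps)
    then have "lam * norm (x + w) = \<bar>1 - t0\<bar> * a" unfolding a_def by (simp add: abs_mult)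
    then have "cosh (lam * norm (x + w)) = cosh ((1 - t0) * a)"
      by (metis abs_mult abs_of_nonneg a0 cosh_real_abs)
    then show ?thesis unfolding y_def by (simp add: algebra_simps)
  qed
  have lin: "lam * sinh (lam * norm x) * (if x = 0 then 0 else gateaux1 norm x w) = a * sinh y"
  proof (cases "x = 0")
    case True
    then have "t0 = 0 \<or> w = 0" using xe by simp
    then show ?thesis using True unfolding y_def a_def by auto
  next
    case False
    let ?h = "\<lambda>t. cosh (lam * norm (x + t *\<^sub>R w))"
    have D1: "(?h has_real_derivative (sinh (lam * norm (x + 0 *\<^sub>R w)) * (lam * gateaux1 norm x w))) (at 0)"
      using gat_has_deriv[OF diff[OF False, of w]]
      by (auto intro!: derivative_eq_intros)
    have eqh: "?h = (\<lambda>t. cosh (a * (t - t0)))"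
    proof
      fix t
      have "x + t *\<^sub>R w = (t - t0) *\<^sub>R w" unfolding xe by (simp add: algebra_simps)
      then have "lam * norm (x + t *\<^sub>R w) = \<bar>t - t0\<bar> * a" unfolding a_def by (simp add: abs_mult)
      then show "?h t = cosh (a * (t - t0))"
        by (metis abs_mult abs_of_nonneg a0 cosh_real_abs mult.commute)
    qed
    have D2: "(?h has_real_derivative (sinh (a * (0 - t0)) * a)) (at 0)"
      unfolding eqh by (auto intro!: derivative_eq_intros)
    have "sinh (lam * norm (x + 0 *\<^sub>R w)) * (lam * gateaux1 norm x w) = sinh (a * (0 - t0)) * a"
      using DERIV_unique[OF D1 D2] .
    then show ?thesis using False unfolding y_def by (simp add: algebra_simps)
  qed
  have c1: "cosh (y + a) \<le> cosh y + a * sinh y + cosh y * (exp a - 1 - a)"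
    by (rule cosh_shift_le[OF a0])
  have c2: "cosh y * (exp a - 1 - a) \<le> cosh y * (a\<^sup>2 * exp a / 2)"
    by (intro mult_left_mono exp_taylor2 a0) simp
  have c3: "cosh y * (a\<^sup>2 * exp a / 2) \<le> (lam\<^sup>2 * (A1\<^sup>2 + A2) * (norm w)\<^sup>2 / 2) * cosh y * exp a"
  proof -
    have "1 \<le> A1\<^sup>2" using A1 by (simp add: one_le_power)
    then have "lam\<^sup>2 * (norm w)\<^sup>2 * 1 \<le> lam\<^sup>2 * (norm w)\<^sup>2 * (A1\<^sup>2 + A2)"
      using A2 by (intro mult_left_mono) auto
    then have "a\<^sup>2 \<le> lam\<^sup>2 * (A1\<^sup>2 + A2) * (norm w)\<^sup>2"
      unfolding a_def by (simp add: power_mult_distrib mult_ac)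
    then show ?thesis
      by (simp add: mult_right_mono mult.commute mult.left_commute divide_right_mono)
  qed
  have calc: "cosh (y + a) \<le> cosh y + a * sinh y + lam\<^sup>2 * (A1\<^sup>2 + A2) * (norm w)\<^sup>2 / 2 * cosh y * exp a"
    using c1 c2 c3 by linarith
  show ?thesis unfolding h1 lin hx a_def[symmetric] using calc by linarith
next
  case False
  then have nz: "\<And>t. x + t *\<^sub>R w \<noteq> 0" by blast
  define \<phi> where "\<phi> = (\<lambda>t. norm (x + t *\<^sub>R w))"
  define \<phi>1 where "\<phi>1 = deriv \<phi>"
  define \<phi>2 where "\<phi>2 = deriv \<phi>1"
  have shift: "(\<lambda>s. norm ((x + t *\<^sub>R w) + s *\<^sub>R w)) = (\<lambda>s. \<phi> (s + t))" for t
    unfolding \<phi>_def by (simp add: algebra_simps)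
  have P: "DERIV \<phi> t :> \<phi>1 t \<and> gateaux1 norm (x + t *\<^sub>R w) w = \<phi>1 t \<and>
           DERIV \<phi>1 t :> \<phi>2 t \<and> gateaux2 norm (x + t *\<^sub>R w) w = \<phi>2 t" for t
  proof -
    have td: "twice_gateaux_diff norm (x + t *\<^sub>R w) w" by (rule diff[OF nz])
    have "\<forall>\<^sub>F s in nhds 0. (\<lambda>s. \<phi> (s + t)) differentiable (at s)"
      using td unfolding twice_gateaux_diff_def shift by blast
    then have "(\<lambda>s. \<phi> (s + t)) differentiable (at 0)" using eventually_nhds_x_imp_x by blast
    then have "DERIV (\<lambda>s. \<phi> (s + t)) 0 :> deriv (\<lambda>s. \<phi> (s + t)) 0"
      using DERIV_deriv_iff_real_differentiable by blast
    then have a: "DERIV \<phi> t :> \<phi>1 t" 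
      using DERIV_shift[of \<phi> _ 0 t] unfolding \<phi>1_def deriv_shift_real by simp
    have b: "gateaux1 norm (x + t *\<^sub>R w) w = \<phi>1 t"
      unfolding gateaux1_def shift \<phi>1_def deriv_shift_real by simp
    have "(\<lambda>s'. \<phi>1 (s' + t)) differentiable (at 0)"
      using td unfolding twice_gateaux_diff_def shift deriv_shift_real \<phi>1_def by blast
    then have "DERIV (\<lambda>s. \<phi>1 (s + t)) 0 :> deriv (\<lambda>s. \<phi>1 (s + t)) 0"
      using DERIV_deriv_iff_real_differentiable by blast
    then have c: "DERIV \<phi>1 t :> \<phi>2 t"
      using DERIV_shift[of \<phi>1 _ 0 t] unfolding \<phi>2_def deriv_shift_real by simp
    have d: "gateaux2 norm (x + t *\<^sub>R w) w = \<phi>2 t"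
      unfolding gateaux2_def shift \<phi>2_def \<phi>1_def deriv_shift_real by simp
    show ?thesis using a b c d by blast
  qed
  have phipos: "\<phi> t > 0" for t unfolding \<phi>_def using nz by simp
  define h0 where "h0 = (\<lambda>t. cosh (lam * \<phi> t))"
  define h1 where "h1 = (\<lambda>t. lam * sinh (lam * \<phi> t) * \<phi>1 t)"
  define h2 where "h2 = (\<lambda>t. lam\<^sup>2 * cosh (lam * \<phi> t) * (\<phi>1 t)\<^sup>2 + lam * sinh (lam * \<phi> t) * \<phi>2 t)"
  define dd where "dd = (\<lambda>m::nat. if m = 0 then h0 else if m = 1 then h1 else h2)"
  have Dh0: "DERIV h0 t :> h1 t" for t
    unfolding h0_def h1_def using P[of t]
    by (auto intro!: derivative_eq_intros simp: algebra_simps)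
  have Dh1: "DERIV h1 t :> h2 t" for t
    unfolding h1_def h2_def using P[of t]
    by (auto intro!: derivative_eq_intros simp: algebra_simps power2_eq_square)
  obtain \<xi> where \<xi>: "0 < \<xi>" "\<xi> < 1"
    "h0 1 = (\<Sum>m<2. (dd m 0 / fact m) * 1 ^ m) + (dd 2 \<xi> / fact 2) * 1 ^ 2"
  proof -
    have DD: "\<forall>m t. m < 2 \<and> 0 \<le> t \<and> t \<le> 1 \<longrightarrow> DERIV (dd m) t :> dd (Suc m) t"
      using Dh0 Dh1 unfolding dd_def by (auto simp: less_2_cases_iff)
    have "dd 0 = h0" unfolding dd_def by simp
    from Maclaurin[of 1 2 dd h0, OF _ _ this DD] show ?thesis using that by auto
  qed
  have taylor: "h0 1 = h0 0 + h1 0 + h2 \<xi> / 2"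
    using \<xi>(3) unfolding dd_def by (simp add: numeral_2_eq_2)
  let ?B = "A1\<^sup>2 + A2"
  have h2b: "h2 \<xi> \<le> lam\<^sup>2 * ?B * (norm w)\<^sup>2 * cosh (lam * \<phi> \<xi>)"
  proof -
    have p1: "\<bar>\<phi>1 \<xi>\<bar> \<le> A1 * norm w" using d1[OF nz, of \<xi> w] P[of \<xi>] by simp
    have p2: "\<bar>\<phi>2 \<xi>\<bar> \<le> A2 * (norm w)\<^sup>2 / \<phi> \<xi>" using d2[OF nz, of \<xi> w] P[of \<xi>] unfolding \<phi>_def by simp
    have "(\<phi>1 \<xi>)\<^sup>2 \<le> (A1 * norm w)\<^sup>2"
      using p1 by (metis abs_ge_zero power2_abs power_mono)
    then have t1: "lam\<^sup>2 * cosh (lam * \<phi> \<xi>) * (\<phi>1 \<xi>)\<^sup>2 \<le> lam\<^sup>2 * cosh (lam * \<phi> \<xi>) * (A1 * norm w)\<^sup>2"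
      by (intro mult_left_mono) auto
    have sp: "0 \<le> sinh (lam * \<phi> \<xi>)" using lam phipos[of \<xi>] by simp
    have "lam * sinh (lam * \<phi> \<xi>) * \<phi>2 \<xi> \<le> lam * sinh (lam * \<phi> \<xi>) * \<bar>\<phi>2 \<xi>\<bar>"
      using sp lam by (intro mult_left_mono) auto
    also have "\<dots> \<le> lam * sinh (lam * \<phi> \<xi>) * (A2 * (norm w)\<^sup>2 / \<phi> \<xi>)"
      using sp lam p2 by (intro mult_left_mono) auto
    also have "\<dots> = (lam * sinh (lam * \<phi> \<xi>) / \<phi> \<xi>) * (A2 * (norm w)\<^sup>2)" by simp
    also have "\<dots> \<le> (lam\<^sup>2 * cosh (lam * \<phi> \<xi>)) * (A2 * (norm w)\<^sup>2)"
    proof (rule mult_right_mono)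
      have "lam * sinh (lam * \<phi> \<xi>) \<le> lam * ((lam * \<phi> \<xi>) * cosh (lam * \<phi> \<xi>))"
        using lam phipos[of \<xi>] by (intro mult_left_mono sinh_le_mult_cosh) auto
      then show "lam * sinh (lam * \<phi> \<xi>) / \<phi> \<xi> \<le> lam\<^sup>2 * cosh (lam * \<phi> \<xi>)"
        using phipos[of \<xi>] by (simp add: divide_le_eq power2_eq_square mult_ac)
    qed (use A2 in simp)
    finally have t2: "lam * sinh (lam * \<phi> \<xi>) * \<phi>2 \<xi> \<le> lam\<^sup>2 * cosh (lam * \<phi> \<xi>) * (A2 * (norm w)\<^sup>2)" .
    show ?thesis using t1 t2 unfolding h2_def by (simp add: algebra_simps power_mult_distrib)
  qed
  have ch: "cosh (lam * \<phi> \<xi>) \<le> cosh (lam * norm x) * exp (lam * norm w)"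
  proof -
    have "\<phi> \<xi> \<le> norm x + norm w"
    proof -
      have "\<phi> \<xi> \<le> norm x + norm (\<xi> *\<^sub>R w)" unfolding \<phi>_def by (rule norm_triangle_ineq)
      also have "norm (\<xi> *\<^sub>R w) \<le> norm w" using \<xi> by (simp add: mult_left_le_one_le)
      finally show ?thesis by simp
    qed
    then have "cosh (lam * \<phi> \<xi>) \<le> cosh (lam * norm x + lam * norm w)"
      using lam phipos[of \<xi>] by (subst cosh_real_nonneg_le_iff) (auto simp: mult_left_mono distrib_left[symmetric])
    also have "\<dots> \<le> cosh (lam * norm x) * exp (lam * norm w)"
      using lam by (intro cosh_add_le_exp) simp
    finally show ?thesis .
  qed
  have x0: "x \<noteq> 0" using nz[of 0] by simp
  have "h2 \<xi> / 2 \<le> (lam\<^sup>2 * ?B * (norm w)\<^sup>2 / 2) * (cosh (lam * norm x) * exp (lam * norm w))"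
  proof -
    have "0 \<le> lam\<^sup>2 * ?B * (norm w)\<^sup>2" using A2 by simp
    then have "lam\<^sup>2 * ?B * (norm w)\<^sup>2 * cosh (lam * \<phi> \<xi>) \<le> lam\<^sup>2 * ?B * (norm w)\<^sup>2 * (cosh (lam * norm x) * exp (lam * norm w))"
      using ch by (intro mult_left_mono)
    then show ?thesis using h2b by simp
  qed
  moreover have "h0 1 = cosh (lam * norm (x + w))" unfolding h0_def \<phi>_def by simp
  moreover have "h0 0 = cosh (lam * norm x)" unfolding h0_def \<phi>_def by simp
  moreover have "h1 0 = lam * sinh (lam * norm x) * gateaux1 norm x w"
    unfolding h1_def using P[of 0] unfolding \<phi>_def by simp
  ultimately show ?thesis using taylor x0 by (simp add: mult.assoc)
qed


lemma borel_measurable_cosh [measurable]: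
  "f \<in> borel_measurable M \<Longrightarrow> (\<lambda>x. cosh (f x :: real)) \<in> borel_measurable M"
proof -
  have "(\<lambda>x::real. cosh x) \<in> borel_measurable borel"
    by (rule borel_measurable_continuous_onI) (intro continuous_intros)
  then show "f \<in> borel_measurable M \<Longrightarrow> ?thesis" using measurable_compose by blast
qed

lemma borel_measurable_sinh [measurable]:
  "f \<in> borel_measurable M \<Longrightarrow> (\<lambda>x. sinh (f x :: real)) \<in> borel_measurable M"
proof -
  have "(\<lambda>x::real. sinh x) \<in> borel_measurable borel"
    by (rule borel_measurable_continuous_onI) (intro continuous_intros)
  then show "f \<in> borel_measurable M \<Longrightarrow> ?thesis" using measurable_compose by blast
qed

locale LA3 = prob_space M for M :: "'w measure" +
  fixes X :: "nat \<Rightarrow> 'w \<Rightarrow> 'b::{banach, second_countable_topology}"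
    and Cset :: "('b \<Rightarrow> real) set"
    and Cnorm :: "('b \<Rightarrow> real) \<Rightarrow> real"
    and c sigma2 A1 A2 C1 C2 :: real
    and k :: nat
  assumes meas: "\<And>i. X i \<in> borel_measurable M"
    and c_pos: "c > 0"
    and bounded: "\<And>i \<omega>. i \<ge> 1 \<Longrightarrow> \<omega> \<in> space M \<Longrightarrow> norm (X i \<omega>) \<le> c"
    and centered: "\<And>i. i \<ge> 1 \<Longrightarrow> (\<integral>\<omega>. X i \<omega> \<partial>M) = 0"
    and C_supp: "\<And>f x. f \<in> Cset \<Longrightarrow> norm x > c \<Longrightarrow> f x = 0"
    and C_bdd: "\<And>f. f \<in> Cset \<Longrightarrow> bounded (f ` cball 0 c)"
    and C_borel: "\<And>f. f \<in> Cset \<Longrightarrow> f \<in> borel_measurable borel"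
    and C_zero: "(\<lambda>x. 0) \<in> Cset"
    and C_scale: "\<And>f a. f \<in> Cset \<Longrightarrow> (\<lambda>x. a * f x) \<in> Cset"
    and Cn_nonneg: "\<And>f. f \<in> Cset \<Longrightarrow> Cnorm f \<ge> 0"
    and Cn_scale: "\<And>f a. f \<in> Cset \<Longrightarrow> Cnorm (\<lambda>x. a * f x) = \<bar>a\<bar> * Cnorm f"
    and A1_ge: "A1 \<ge> 1" and A2_pos: "A2 > 0"
    and A1_diff: "\<And>(x::'b) v. x \<noteq> 0 \<Longrightarrow> twice_gateaux_diff norm x v"
    and A1_d1: "\<And>(x::'b) v. x \<noteq> 0 \<Longrightarrow> \<bar>gateaux1 norm x v\<bar> \<le> A1 * norm v"
    and A1_d2: "\<And>(x::'b) v. x \<noteq> 0 \<Longrightarrow> \<bar>gateaux2 norm x v\<bar> \<le> A2 * (norm v)\<^sup>2 / norm x"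
    and sigma2_pos: "sigma2 > 0"
    and A2_var: "\<And>i. i \<ge> 1 \<Longrightarrow> (\<integral>\<omega>. (norm (X i \<omega>))\<^sup>2 \<partial>M) \<le> sigma2"
    and C1_nonneg: "C1 \<ge> 0" and C2_nonneg: "C2 \<ge> 0"
    and A3_lin: "\<And>s. bounded_linear s \<Longrightarrow> (\<lambda>x. if norm x \<le> c then s x else 0) \<in> Cset"
    and A3_lin_bd: "\<And>s. bounded_linear s \<Longrightarrow> onorm s \<le> 1 \<Longrightarrow>
                      Cnorm (\<lambda>x. if norm x \<le> c then s x else 0) \<le> C1"
    and A3_sq: "(\<lambda>x. if norm x \<le> c then (norm x)\<^sup>2 else 0) \<in> Cset"
    and A3_sq_bd: "Cnorm (\<lambda>x. if norm x \<le> c then (norm x)\<^sup>2 else 0) \<le> C2"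
    and Phi_fin: "C_mixing_coeff M X Cset Cnorm k \<noteq> \<infinity>"
begin

abbreviation "F i \<equiv> nat_filtr M X i"

lemma F_subalg: "subalgebra M (F i)"
proof -
  let ?G = "{X j -` A \<inter> space M | j A. j \<in> {1..i} \<and> A \<in> sets borel}"
  have G: "?G \<subseteq> sets M" using meas by (auto simp: measurable_sets)
  then have "?G \<subseteq> Pow (space M)" using sets.sets_into_space by blast
  then have sp: "space (F i) = space M" unfolding nat_filtr_def by simp
  have "sets (F i) = sigma_sets (space M) ?G"
    unfolding nat_filtr_def using \<open>?G \<subseteq> Pow (space M)\<close> by (simp add: sets_measure_of)
  also have "\<dots> \<subseteq> sets M" using G by (simp add: sets.sigma_sets_subset)
  finally show ?thesis unfolding subalgebra_def using sp by simp
qed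

lemma F_sfs: "sigma_finite_subalgebra M (F i)"
  by (rule finite_measure_subalgebra_is_sigma_finite)
     (simp add: finite_measure_subalgebra_def finite_measure_subalgebra_axioms_def F_subalg finite_measure_axioms)

lemma space_F [simp]: "space (F i) = space M"
  using F_subalg unfolding subalgebra_def by simp

lemma X_F_meas: "1 \<le> j \<Longrightarrow> j \<le> i \<Longrightarrow> X j \<in> borel_measurable (F i)"
proof (rule measurableI)
  fix A :: "'b set" assume A: "A \<in> sets borel" and j: "1 \<le> j" "j \<le> i"
  let ?G = "{X j -` A \<inter> space M | j A. j \<in> {1..i} \<and> A \<in> sets borel}"
  have G: "?G \<subseteq> Pow (space M)" by auto
  have "X j -` A \<inter> space M \<in> ?G" using A j by auto
  then have "X j -` A \<inter> space M \<in> sigma_sets (space M) ?G" by (rule sigma_sets.Basic)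
  then show "X j -` A \<inter> space (F i) \<in> sets (F i)"
    unfolding nat_filtr_def using G by (simp add: sets_measure_of)
qed simp

definition "Phi = real_of_ereal (C_mixing_coeff M X Cset Cnorm k)"

lemma phiX_bound:
  assumes "\<phi> \<in> Cset" "1 \<le> j"
  shows "\<exists>B. \<forall>\<omega>\<in>space M. \<bar>\<phi> (X j \<omega>)\<bar> \<le> B"
proof -
  from C_bdd[OF assms(1)] obtain B where B: "\<And>y. y \<in> \<phi> ` cball 0 c \<Longrightarrow> norm y \<le> B"
    unfolding bounded_iff by blast
  have "\<bar>\<phi> (X j \<omega>)\<bar> \<le> B" if "\<omega> \<in> space M" for \<omega>
    using B[of "\<phi> (X j \<omega>)"] bounded[OF assms(2) that] by auto
  then show ?thesis by blast
qed

lemma phiX_meas [measurable]: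
  assumes "\<phi> \<in> Cset" shows "(\<lambda>\<omega>. \<phi> (X j \<omega>)) \<in> borel_measurable M"
  using measurable_compose[OF meas C_borel[OF assms]] .

lemma phiX_int:
  assumes "\<phi> \<in> Cset" "1 \<le> j"
  shows "integrable M (\<lambda>\<omega>. \<phi> (X j \<omega>))"
proof -
  obtain B where "\<forall>\<omega>\<in>space M. \<bar>\<phi> (X j \<omega>)\<bar> \<le> B" using phiX_bound[OF assms] by blast
  then show ?thesis
    by (intro integrable_const_bound[where B=B]) (auto simp: phiX_meas[OF assms(1)])
qed

lemma mix_basic:
  assumes "\<psi> \<in> Cset" "Cnorm \<psi> \<le> 1" "1 \<le> i"
  shows "AE \<omega> in M. \<bar>real_cond_exp M (F i) (\<lambda>\<omega>. \<psi> (X (i + k) \<omega>)) \<omega> - (\<integral>\<omega>. \<psi> (X (i + k) \<omega>) \<partial>M)\<bar> \<le> Phi"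
proof -
  let ?C = "C_mixing_coeff M X Cset Cnorm k"
  let ?f = "\<lambda>\<omega>. ereal \<bar>real_cond_exp M (F i) (\<lambda>\<omega>. \<psi> (X (i + k) \<omega>)) \<omega> - (\<integral>\<omega>. \<psi> (X (i + k) \<omega>) \<partial>M)\<bar>"
  have "esssup M ?f \<le> ?C"
    unfolding C_mixing_coeff_def
    by (rule SUP_upper2[where i="(\<psi>, i)"]) (use assms in auto)
  with esssup_AE[of ?f M] have ae: "AE \<omega> in M. ?f \<omega> \<le> ?C" by (auto elim: AE_mp)
  have "?C \<noteq> -\<infinity>"
  proof
    assume "?C = -\<infinity>"
    with ae have "AE \<omega> in M. False" by (auto elim: AE_mp)
    then show False using AE_False prob_space by simp
  qed
  then have "?C = ereal Phi" unfolding Phi_def using Phi_fin by (cases ?C) auto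
  with ae show ?thesis by simp
qed

lemma zero_fun_C: "(\<lambda>x. 0) \<in> Cset" "Cnorm (\<lambda>x. 0) = 0"
proof -
  show "(\<lambda>x. 0) \<in> Cset" by (rule C_zero)
  have "Cnorm (\<lambda>x. 0 * (0::real)) = \<bar>0\<bar> * Cnorm (\<lambda>x. 0)" by (rule Cn_scale[OF C_zero])
  then show "Cnorm (\<lambda>x. 0) = 0" by simp
qed

lemma Phi_nonneg: "0 \<le> Phi"
proof -
  have "AE \<omega> in M. \<bar>real_cond_exp M (F 1) (\<lambda>\<omega>. (\<lambda>x. 0::real) (X (1 + k) \<omega>)) \<omega> - (\<integral>\<omega>. (\<lambda>x. 0::real) (X (1 + k) \<omega>) \<partial>M)\<bar> \<le> Phi"
    by (rule mix_basic) (auto simp: zero_fun_C)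
  then have ae: "AE \<omega> in M. 0 \<le> Phi" by eventually_elim (rule order.trans[OF abs_ge_zero])
  show ?thesis
  proof (rule ccontr)
    assume "\<not> 0 \<le> Phi"
    with ae have "AE \<omega> in M. False" by simp
    then show False using AE_False prob_space by simp
  qed
qed

lemma mix_pos:
  assumes "\<phi> \<in> Cset" "Cnorm \<phi> \<le> K" "0 < K" "1 \<le> i"
  shows "AE \<omega> in M. \<bar>real_cond_exp M (F i) (\<lambda>\<omega>. \<phi> (X (i + k) \<omega>)) \<omega> - (\<integral>\<omega>. \<phi> (X (i + k) \<omega>) \<partial>M)\<bar> \<le> K * Phi"
proof -
  interpret S: sigma_finite_subalgebra M "F i" by (rule F_sfs)
  let ?\<psi> = "\<lambda>x. (1/K) * \<phi> x"
  have p1: "?\<psi> \<in> Cset" by (rule C_scale[OF assms(1)])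
  have "Cnorm ?\<psi> = (1/K) * Cnorm \<phi>" using Cn_scale[OF assms(1), of "1/K"] assms(3) by simp
  also have "\<dots> \<le> 1" using assms(2,3) by (simp add: field_simps)
  finally have p2: "Cnorm ?\<psi> \<le> 1" .
  have ae1: "AE \<omega> in M. \<bar>real_cond_exp M (F i) (\<lambda>\<omega>. ?\<psi> (X (i + k) \<omega>)) \<omega> - (\<integral>\<omega>. ?\<psi> (X (i + k) \<omega>) \<partial>M)\<bar> \<le> Phi"
    by (rule mix_basic[OF p1 p2 assms(4)])
  have int: "integrable M (\<lambda>\<omega>. \<phi> (X (i + k) \<omega>))" by (rule phiX_int) (use assms in auto)
  have ae2: "AE \<omega> in M. real_cond_exp M (F i) (\<lambda>\<omega>. (1/K) * \<phi> (X (i + k) \<omega>)) \<omega> = (1/K) * real_cond_exp M (F i) (\<lambda>\<omega>. \<phi> (X (i + k) \<omega>)) \<omega>"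
    by (rule S.real_cond_exp_cmult[OF int])
  have eqI: "(\<integral>\<omega>. ?\<psi> (X (i + k) \<omega>) \<partial>M) = (1/K) * (\<integral>\<omega>. \<phi> (X (i + k) \<omega>) \<partial>M)" by simp
  show ?thesis using ae1 ae2
  proof (eventually_elim)
    case (elim \<omega>)
    then have "\<bar>(1/K) * (real_cond_exp M (F i) (\<lambda>\<omega>. \<phi> (X (i + k) \<omega>)) \<omega> - (\<integral>\<omega>. \<phi> (X (i + k) \<omega>) \<partial>M))\<bar> \<le> Phi"
      using eqI by (simp add: right_diff_distrib)
    then show ?case using assms(3) by (simp add: abs_mult field_simps)
  qed
qed

lemma mix_AE:
  assumes "\<phi> \<in> Cset" "Cnorm \<phi> \<le> K" "0 \<le> K" "1 \<le> i"
  shows "AE \<omega> in M. \<bar>real_cond_exp M (F i) (\<lambda>\<omega>. \<phi> (X (i + k) \<omega>)) \<omega> - (\<integral>\<omega>. \<phi> (X (i + k) \<omega>) \<partial>M)\<bar> \<le> K * Phi"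
proof -
  have "\<forall>n::nat. AE \<omega> in M. \<bar>real_cond_exp M (F i) (\<lambda>\<omega>. \<phi> (X (i + k) \<omega>)) \<omega> - (\<integral>\<omega>. \<phi> (X (i + k) \<omega>) \<partial>M)\<bar> \<le> (K + 1 / Suc n) * Phi"
  proof
    fix n :: nat
    have h1: "0 \<le> 1 / real (Suc n)" by simp
    have "Cnorm \<phi> \<le> K + 1 / Suc n" using assms(2) h1 by linarith
    moreover have "0 < K + 1 / Suc n" using assms(3) by (simp add: add_nonneg_pos)
    ultimately show "AE \<omega> in M. \<bar>real_cond_exp M (F i) (\<lambda>\<omega>. \<phi> (X (i + k) \<omega>)) \<omega> - (\<integral>\<omega>. \<phi> (X (i + k) \<omega>) \<partial>M)\<bar> \<le> (K + 1 / Suc n) * Phi"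
      using assms by (intro mix_pos) simp_all
  qed
  then have "AE \<omega> in M. \<forall>n::nat. \<bar>real_cond_exp M (F i) (\<lambda>\<omega>. \<phi> (X (i + k) \<omega>)) \<omega> - (\<integral>\<omega>. \<phi> (X (i + k) \<omega>) \<partial>M)\<bar> \<le> (K + 1 / Suc n) * Phi"
    by (simp add: AE_all_countable)
  then show ?thesis
  proof (eventually_elim)
    case (elim \<omega>)
    let ?d = "\<bar>real_cond_exp M (F i) (\<lambda>\<omega>. \<phi> (X (i + k) \<omega>)) \<omega> - (\<integral>\<omega>. \<phi> (X (i + k) \<omega>) \<partial>M)\<bar>"
    show ?case
    proof (rule field_le_epsilon)
      fix e :: real assume e: "0 < e"
      obtain n :: nat where n0: "Phi / e < real n" using reals_Archimedean2 by blast
      then have n: "Phi / e < Suc n" by simp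
      then have "Phi / Suc n < e" using e by (simp add: field_simps)
      moreover have "?d \<le> K * Phi + Phi / Suc n" using elim[rule_format, of n] by (simp add: distrib_right)
      ultimately show "?d \<le> K * Phi + e" by simp
    qed
  qed
qed

lemma mix_int:
  assumes G: "G \<in> borel_measurable (F i)" "\<And>\<omega>. \<omega> \<in> space M \<Longrightarrow> \<bar>G \<omega>\<bar> \<le> Gb"
    and "\<phi> \<in> Cset" "Cnorm \<phi> \<le> K" "0 \<le> K" "1 \<le> i"
  shows "\<bar>(\<integral>\<omega>. G \<omega> * \<phi> (X (i + k) \<omega>) \<partial>M) - (\<integral>\<omega>. G \<omega> \<partial>M) * (\<integral>\<omega>. \<phi> (X (i + k) \<omega>) \<partial>M)\<bar>
         \<le> K * Phi * (\<integral>\<omega>. \<bar>G \<omega>\<bar> \<partial>M)"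
proof -
  interpret S: sigma_finite_subalgebra M "F i" by (rule F_sfs)
  let ?Z = "\<lambda>\<omega>. \<phi> (X (i + k) \<omega>)"
  let ?ce = "real_cond_exp M (F i) ?Z"
  let ?EZ = "\<integral>\<omega>. ?Z \<omega> \<partial>M"
  have GM [measurable]: "G \<in> borel_measurable M" using measurable_from_subalg[OF F_subalg G(1)] .
  obtain B where B: "\<forall>\<omega>\<in>space M. \<bar>?Z \<omega>\<bar> \<le> B" using phiX_bound[OF assms(3), of "i + k"] assms by auto
  have Zm [measurable]: "?Z \<in> borel_measurable M" using phiX_meas[OF assms(3)] .
  have intG: "integrable M G" by (intro integrable_const_bound[where B=Gb]) (use G in auto)
  have intGZ: "integrable M (\<lambda>\<omega>. G \<omega> * ?Z \<omega>)"
  proof (intro integrable_const_bound[where B="Gb * B"])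
    show "AE x in M. norm (G x * ?Z x) \<le> Gb * B"
    proof (intro AE_I2)
      fix x assume x: "x \<in> space M"
      have "0 \<le> Gb" using G(2)[OF x] by linarith
      then show "norm (G x * ?Z x) \<le> Gb * B"
        using G(2)[OF x] B x by (auto simp: abs_mult intro!: mult_mono)
    qed
  qed simp
  have c1: "integrable M (\<lambda>\<omega>. G \<omega> * ?ce \<omega>)" "(\<integral>\<omega>. G \<omega> * ?ce \<omega> \<partial>M) = (\<integral>\<omega>. G \<omega> * ?Z \<omega> \<partial>M)"
    using S.real_cond_exp_intg[OF intGZ G(1) Zm] by auto
  have "(\<integral>\<omega>. G \<omega> * ?Z \<omega> \<partial>M) - (\<integral>\<omega>. G \<omega> \<partial>M) * ?EZ = (\<integral>\<omega>. G \<omega> * ?ce \<omega> - G \<omega> * ?EZ \<partial>M)"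
    using c1 intG by (simp add: integral_diff)
  also have "\<bar>\<dots>\<bar> \<le> (\<integral>\<omega>. \<bar>G \<omega> * ?ce \<omega> - G \<omega> * ?EZ\<bar> \<partial>M)" by (rule integral_abs_bound)
  also have "\<dots> \<le> (\<integral>\<omega>. \<bar>G \<omega>\<bar> * (K * Phi) \<partial>M)"
  proof (rule integral_mono_AE)
    show "integrable M (\<lambda>\<omega>. \<bar>G \<omega> * ?ce \<omega> - G \<omega> * ?EZ\<bar>)" using c1 intG by auto
    show "integrable M (\<lambda>\<omega>. \<bar>G \<omega>\<bar> * (K * Phi))" using intG by auto
    show "AE \<omega> in M. \<bar>G \<omega> * ?ce \<omega> - G \<omega> * ?EZ\<bar> \<le> \<bar>G \<omega>\<bar> * (K * Phi)"
      using mix_AE[OF assms(3-6)]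
    proof (eventually_elim)
      case (elim \<omega>)
      have "\<bar>G \<omega> * ?ce \<omega> - G \<omega> * ?EZ\<bar> = \<bar>G \<omega>\<bar> * \<bar>?ce \<omega> - ?EZ\<bar>" by (simp add: abs_mult[symmetric] right_diff_distrib)
      also have "\<dots> \<le> \<bar>G \<omega>\<bar> * (K * Phi)" using elim by (intro mult_left_mono) auto
      finally show ?case .
    qed
  qed
  also have "\<dots> = K * Phi * (\<integral>\<omega>. \<bar>G \<omega>\<bar> \<partial>M)" by (simp add: mult.commute)
  finally show ?thesis .
qed

end

lemma finite_approx:
  fixes Y :: "'w \<Rightarrow> 'b::{real_normed_vector, second_countable_topology}"
  assumes Y: "Y \<in> borel_measurable N" and sub: "subalgebra M N" and fm: "finite_measure M"
    and d: "0 < \<delta>" and e: "0 < \<epsilon>"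
  shows "\<exists>Y'. Y' \<in> borel_measurable N \<and> finite (range Y') \<and>
          (\<forall>\<omega>. dist (Y \<omega>) (Y' \<omega>) < \<delta> \<or> Y' \<omega> = 0) \<and>
          measure M {\<omega> \<in> space M. \<not> dist (Y \<omega>) (Y' \<omega>) < \<delta>} \<le> \<epsilon>"
proof -
  interpret finite_measure M by fact
  obtain D :: "'b set" where D: "countable D" "\<And>U. open U \<Longrightarrow> U \<noteq> {} \<Longrightarrow> \<exists>d\<in>D. d \<in> U"
    using countable_dense_exists by blast
  have "D \<noteq> {}" using D(2)[of UNIV] by auto
  define dd where "dd = from_nat_into D"
  have rng: "range dd = D" unfolding dd_def using range_from_nat_into[OF \<open>D \<noteq> {}\<close> D(1)] .
  define g :: "nat \<Rightarrow> 'b \<Rightarrow> 'b" where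
    "g = rec_nat (\<lambda>y. 0) (\<lambda>j gj y. if dist y (dd j) < \<delta> then dd j else gj y)"
  have g0: "g 0 = (\<lambda>y. 0)" and gS: "g (Suc j) = (\<lambda>y. if dist y (dd j) < \<delta> then dd j else g j y)" for j
    unfolding g_def by simp_all
  have P1: "dist y (g NN y) < \<delta> \<or> g NN y = 0" for NN y
    by (induction NN) (auto simp: g0 gS)
  have P2: "(\<exists>j<NN. dist y (dd j) < \<delta>) \<Longrightarrow> dist y (g NN y) < \<delta>" for NN y
    by (induction NN) (auto simp: g0 gS less_Suc_eq)
  have P3': "g NN y \<in> insert 0 (dd ` {..<NN})" for NN y
    by (induction NN) (auto simp: g0 gS)
  have P3: "range (g NN) \<subseteq> insert 0 (dd ` {..<NN})" for NN
    using P3' by blast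
  have P4: "g NN \<in> borel_measurable borel" for NN
  proof (induction NN)
    case 0 then show ?case by (simp add: g0)
  next
    case (Suc NN)
    have "{y \<in> space borel. dist y (dd NN) < \<delta>} \<in> sets borel"
      using borel_open[OF open_ball[of "dd NN" \<delta>]] by (simp add: ball_def dist_commute)
    then show ?case unfolding gS by (intro measurable_If Suc) auto
  qed
  define B where "B = (\<lambda>NN. {\<omega> \<in> space M. \<forall>j<NN. \<not> dist (Y \<omega>) (dd j) < \<delta>})"
  have YM [measurable]: "Y \<in> borel_measurable M" using measurable_from_subalg[OF sub Y] .
  have Bsets: "B NN \<in> sets M" for NN
  proof -
    have "B NN = (\<Inter>j<NN. {\<omega> \<in> space M. \<not> dist (Y \<omega>) (dd j) < \<delta>}) \<inter> space M" unfolding B_def by auto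
    also have "\<dots> \<in> sets M" by measurable
    finally show ?thesis .
  qed
  have Bdec: "antimono_on UNIV B" unfolding B_def by (auto simp: monotone_on_def)
  have Bint: "(\<Inter>NN. B NN) = {}"
  proof (rule ccontr)
    assume "(\<Inter>NN. B NN) \<noteq> {}"
    then obtain \<omega> where \<omega>: "\<And>NN. \<omega> \<in> B NN" by blast
    obtain d where "d \<in> D" "d \<in> ball (Y \<omega>) \<delta>" using D(2)[of "ball (Y \<omega>) \<delta>"] d by auto
    then obtain j where "dd j = d" using rng by auto
    then have "dist (Y \<omega>) (dd j) < \<delta>" using \<open>d \<in> ball _ _\<close> by simp
    then show False using \<omega>[of "Suc j"] unfolding B_def by auto
  qed
  have "(\<lambda>NN. measure M (B NN)) \<longlonglongrightarrow> measure M (\<Inter>NN. B NN)"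
    by (rule finite_Lim_measure_decseq) (use Bsets Bdec in auto)
  then have "(\<lambda>NN. measure M (B NN)) \<longlonglongrightarrow> 0" using Bint by simp
  then have "\<forall>\<^sub>F NN in sequentially. measure M (B NN) < \<epsilon>" using e by (rule order_tendstoD)
  then obtain NN where BN: "measure M (B NN) < \<epsilon>" by (auto simp: eventually_sequentially)
  define Y' where "Y' = (\<lambda>\<omega>. g NN (Y \<omega>))"
  have "Y' \<in> borel_measurable N" unfolding Y'_def using measurable_compose[OF Y P4] .
  moreover have "finite (range Y')"
    by (rule finite_subset[of _ "insert 0 (dd ` {..<NN})"]) (use P3[of NN] in \<open>auto simp: Y'_def\<close>)
  moreover have "\<forall>\<omega>. dist (Y \<omega>) (Y' \<omega>) < \<delta> \<or> Y' \<omega> = 0" unfolding Y'_def using P1 by blast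
  moreover have "measure M {\<omega> \<in> space M. \<not> dist (Y \<omega>) (Y' \<omega>) < \<delta>} \<le> \<epsilon>"
  proof -
    have "{\<omega> \<in> space M. \<not> dist (Y \<omega>) (Y' \<omega>) < \<delta>} \<subseteq> B NN"
      unfolding B_def Y'_def using P2 by blast
    then have "measure M {\<omega> \<in> space M. \<not> dist (Y \<omega>) (Y' \<omega>) < \<delta>} \<le> measure M (B NN)"
      by (intro finite_measure_mono Bsets)
    then show ?thesis using BN by simp
  qed
  ultimately show ?thesis by blast
qed

context LA3 begin

definition "mt = C1 * A1 * Phi"
definition "st2 = sigma2 + C2 * Phi"
definition "BB = A1\<^sup>2 + A2"
definition Dz :: "'b \<Rightarrow> 'b \<Rightarrow> real" where "Dz y v = (if y = 0 then 0 else gateaux1 norm y v)"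

lemma mt_nonneg: "0 \<le> mt" unfolding mt_def using C1_nonneg A1_ge Phi_nonneg by simp
lemma st2_pos: "0 < st2" unfolding st2_def using C2_nonneg Phi_nonneg sigma2_pos by (simp add: add_pos_nonneg)
lemma BB_ge1: "1 \<le> BB" unfolding BB_def using A1_ge A2_pos by (smt (verit) one_le_power)

lemma Dz_lin: "y \<noteq> 0 \<Longrightarrow> bounded_linear (Dz y) \<and> onorm (Dz y) \<le> A1"
proof -
  assume y: "y \<noteq> 0"
  have "Dz y = gateaux1 norm y" unfolding Dz_def using y by auto
  moreover have "bounded_linear (gateaux1 norm y)" "onorm (gateaux1 norm y) \<le> A1"
    using gat_linear[of y A1] A1_diff[OF y] A1_d1[OF y] A1_ge by auto
  ultimately show ?thesis by simp
qed

lemma Dz_bound: "\<bar>Dz y v\<bar> \<le> A1 * norm v"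
  unfolding Dz_def using A1_d1 A1_ge by auto

lemma Dz_add: "Dz y (v + w) = Dz y v + Dz y w"
proof (cases "y = 0")
  case True then show ?thesis by (simp add: Dz_def)
next
  case False
  then have "bounded_linear (Dz y)" using Dz_lin by blast
  then show ?thesis by (metis bounded_linear.linear linear_add)
qed

lemma lin_term:
  assumes G: "G \<in> borel_measurable (F i)" "\<And>\<omega>. \<omega> \<in> space M \<Longrightarrow> \<bar>G \<omega>\<bar> \<le> Gb"
     "\<And>\<omega>. \<omega> \<in> space M \<Longrightarrow> 0 \<le> G \<omega>"
    and i: "1 \<le> i" and s: "bounded_linear s" "onorm s \<le> A1"
  shows "(\<integral>\<omega>. G \<omega> * s (X (i + k) \<omega>) \<partial>M) \<le> mt * (\<integral>\<omega>. G \<omega> \<partial>M)"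
proof -
  let ?s' = "\<lambda>x. (1 / A1) * s x"
  have A1p: "0 < A1" using A1_ge by simp
  have bl: "bounded_linear ?s'" by (rule bounded_linear_compose[OF bounded_linear_mult_right s(1)])
  have "onorm ?s' = \<bar>1/A1\<bar> * onorm s" using onorm_scaleR[OF s(1), of "1/A1"] by simp
  also have "\<dots> \<le> 1" using s(2) A1p by (simp add: field_simps)
  finally have on: "onorm ?s' \<le> 1" .
  define \<phi> where "\<phi> = (\<lambda>x. if norm x \<le> c then ?s' x else 0)"
  have \<phi>C: "\<phi> \<in> Cset" unfolding \<phi>_def by (rule A3_lin[OF bl])
  have \<phi>n: "Cnorm \<phi> \<le> C1" unfolding \<phi>_def by (rule A3_lin_bd[OF bl on])
  have eq: "\<phi> (X (i + k) \<omega>) = ?s' (X (i + k) \<omega>)" if "\<omega> \<in> space M" for \<omega>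
    unfolding \<phi>_def using bounded[of "i + k" \<omega>] that i by auto
  have intX: "integrable M (X (i + k))"
    by (rule integrable_const_bound[where B=c]) (use bounded[of "i+k"] i meas in auto)
  have "(\<integral>\<omega>. \<phi> (X (i + k) \<omega>) \<partial>M) = (\<integral>\<omega>. ?s' (X (i + k) \<omega>) \<partial>M)"
    using eq by (intro Bochner_Integration.integral_cong) auto
  also have "\<dots> = ?s' (\<integral>\<omega>. X (i + k) \<omega> \<partial>M)" by (rule integral_bounded_linear[OF bl intX])
  also have "\<dots> = 0" using centered[of "i + k"] i linear_0[OF bounded_linear.linear[OF bl]] by simp
  finally have E0: "(\<integral>\<omega>. \<phi> (X (i + k) \<omega>) \<partial>M) = 0" .
  have "\<bar>(\<integral>\<omega>. G \<omega> * \<phi> (X (i + k) \<omega>) \<partial>M) - (\<integral>\<omega>. G \<omega> \<partial>M) * (\<integral>\<omega>. \<phi> (X (i + k) \<omega>) \<partial>M)\<bar>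
         \<le> C1 * Phi * (\<integral>\<omega>. \<bar>G \<omega>\<bar> \<partial>M)"
    by (rule mix_int[OF G(1,2) \<phi>C \<phi>n C1_nonneg i])
  moreover have "(\<integral>\<omega>. \<bar>G \<omega>\<bar> \<partial>M) = (\<integral>\<omega>. G \<omega> \<partial>M)" using G(3) by (intro Bochner_Integration.integral_cong) auto
  moreover have "(\<integral>\<omega>. G \<omega> * \<phi> (X (i + k) \<omega>) \<partial>M) = (1 / A1) * (\<integral>\<omega>. G \<omega> * s (X (i + k) \<omega>) \<partial>M)"
  proof -
    have "(\<integral>\<omega>. G \<omega> * \<phi> (X (i + k) \<omega>) \<partial>M) = (\<integral>\<omega>. (1 / A1) * (G \<omega> * s (X (i + k) \<omega>)) \<partial>M)"
      using eq by (intro Bochner_Integration.integral_cong) auto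
    then show ?thesis by simp
  qed
  ultimately have "\<bar>(1 / A1) * (\<integral>\<omega>. G \<omega> * s (X (i + k) \<omega>) \<partial>M)\<bar> \<le> C1 * Phi * (\<integral>\<omega>. G \<omega> \<partial>M)"
    using E0 by simp
  then have "(1 / A1) * (\<integral>\<omega>. G \<omega> * s (X (i + k) \<omega>) \<partial>M) \<le> C1 * Phi * (\<integral>\<omega>. G \<omega> \<partial>M)"
    by (rule order.trans[OF abs_ge_self])
  then have "(\<integral>\<omega>. G \<omega> * s (X (i + k) \<omega>) \<partial>M) \<le> A1 * (C1 * Phi * (\<integral>\<omega>. G \<omega> \<partial>M))"
    using A1p by (simp add: field_simps)
  then show ?thesis unfolding mt_def by (simp add: mult_ac)
qed

lemma sq_term:
  assumes G: "G \<in> borel_measurable (F i)" "\<And>\<omega>. \<omega> \<in> space M \<Longrightarrow> \<bar>G \<omega>\<bar> \<le> Gb"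
     "\<And>\<omega>. \<omega> \<in> space M \<Longrightarrow> 0 \<le> G \<omega>"
    and i: "1 \<le> i"
  shows "(\<integral>\<omega>. G \<omega> * (norm (X (i + k) \<omega>))\<^sup>2 \<partial>M) \<le> st2 * (\<integral>\<omega>. G \<omega> \<partial>M)"
proof -
  define \<phi> where "\<phi> = (\<lambda>x::'b. if norm x \<le> c then (norm x)\<^sup>2 else 0)"
  have \<phi>C: "\<phi> \<in> Cset" unfolding \<phi>_def by (rule A3_sq)
  have \<phi>n: "Cnorm \<phi> \<le> C2" unfolding \<phi>_def by (rule A3_sq_bd)
  have eq: "\<phi> (X (i + k) \<omega>) = (norm (X (i + k) \<omega>))\<^sup>2" if "\<omega> \<in> space M" for \<omega>
    unfolding \<phi>_def using bounded[of "i + k" \<omega>] that i by auto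
  have E: "(\<integral>\<omega>. \<phi> (X (i + k) \<omega>) \<partial>M) \<le> sigma2"
  proof -
    have "(\<integral>\<omega>. \<phi> (X (i + k) \<omega>) \<partial>M) = (\<integral>\<omega>. (norm (X (i + k) \<omega>))\<^sup>2 \<partial>M)"
      using eq by (rule Bochner_Integration.integral_cong[OF refl])
    then show ?thesis using A2_var[of "i + k"] i by simp
  qed
  have m: "\<bar>(\<integral>\<omega>. G \<omega> * \<phi> (X (i + k) \<omega>) \<partial>M) - (\<integral>\<omega>. G \<omega> \<partial>M) * (\<integral>\<omega>. \<phi> (X (i + k) \<omega>) \<partial>M)\<bar>
         \<le> C2 * Phi * (\<integral>\<omega>. \<bar>G \<omega>\<bar> \<partial>M)"
    by (rule mix_int[OF G(1,2) \<phi>C \<phi>n C2_nonneg i])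
  have absG: "(\<integral>\<omega>. \<bar>G \<omega>\<bar> \<partial>M) = (\<integral>\<omega>. G \<omega> \<partial>M)" using G(3) by (intro Bochner_Integration.integral_cong) auto
  have EG: "0 \<le> (\<integral>\<omega>. G \<omega> \<partial>M)" using G(3) by (intro integral_nonneg_AE) (auto intro: AE_I2)
  have "(\<integral>\<omega>. G \<omega> * \<phi> (X (i + k) \<omega>) \<partial>M) = (\<integral>\<omega>. G \<omega> * (norm (X (i + k) \<omega>))\<^sup>2 \<partial>M)"
    using eq by (intro Bochner_Integration.integral_cong) auto
  moreover have "(\<integral>\<omega>. G \<omega> \<partial>M) * (\<integral>\<omega>. \<phi> (X (i + k) \<omega>) \<partial>M) \<le> (\<integral>\<omega>. G \<omega> \<partial>M) * sigma2"
    using E EG by (intro mult_left_mono)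
  ultimately show ?thesis using m absG unfolding st2_def by (simp add: algebra_simps)
qed

end

context LA3 begin

lemma Dz_meas [measurable]:
  assumes "f \<in> borel_measurable N"
  shows "(\<lambda>\<omega>. Dz z (f \<omega>)) \<in> borel_measurable N"
proof (cases "z = 0")
  case True then show ?thesis by (simp add: Dz_def)
next
  case False
  then have "bounded_linear (Dz z)" using Dz_lin by blast
  then have "Dz z \<in> borel_measurable borel"
    by (intro borel_measurable_continuous_onI linear_continuous_on)
  then show ?thesis using measurable_compose[OF assms] by blast
qed

lemma lin_fin:
  assumes Y': "Y' \<in> borel_measurable (F i)" "finite (range Y')" and i: "1 \<le> i"
    and g: "\<And>y. 0 \<le> g y"
  shows "integrable M (\<lambda>\<omega>. g (Y' \<omega>) * Dz (Y' \<omega>) (X (i + k) \<omega>))"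
    "(\<integral>\<omega>. g (Y' \<omega>) * Dz (Y' \<omega>) (X (i + k) \<omega>) \<partial>M) \<le> mt * (\<integral>\<omega>. g (Y' \<omega>) \<partial>M)"
proof -
  let ?Z = "range Y'"
  let ?X = "X (i + k)"
  define S where "S z = Y' -` {z} \<inter> space M" for z
  define Gz where "Gz z \<omega> = indicator (S z) \<omega> * g z" for z \<omega>
  have SF: "S z \<in> sets (F i)" for z
  proof -
    have "Y' -` {z} \<inter> space (F i) \<in> sets (F i)"
      by (rule measurable_sets[OF Y'(1)]) (rule borel_closed, simp)
    then show ?thesis unfolding S_def by simp
  qed
  have SM: "S z \<in> sets M" for z using SF[of z] F_subalg unfolding subalgebra_def by auto
  have GzF: "Gz z \<in> borel_measurable (F i)" for z
    unfolding Gz_def using SF by measurable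
  have GzM [measurable]: "Gz z \<in> borel_measurable M" for z
    unfolding Gz_def using SM by measurable
  have Gzb: "\<bar>Gz z \<omega>\<bar> \<le> g z" "0 \<le> Gz z \<omega>" for z \<omega>
    unfolding Gz_def using g[of z] by (auto simp: indicator_def)
  have XM [measurable]: "?X \<in> borel_measurable M" by (rule meas)
  have intX: "integrable M (\<lambda>\<omega>. Gz z \<omega> * Dz z (?X \<omega>))" for z
  proof (rule integrable_const_bound[where B="g z * (A1 * c)"])
    show "AE \<omega> in M. norm (Gz z \<omega> * Dz z (?X \<omega>)) \<le> g z * (A1 * c)"
    proof (intro AE_I2)
      fix \<omega> assume \<omega>: "\<omega> \<in> space M"
      have "norm (?X \<omega>) \<le> c" using bounded[of "i + k" \<omega>] \<omega> i by simp
      then have "A1 * norm (?X \<omega>) \<le> A1 * c" using A1_ge by (intro mult_left_mono) auto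
      then have "\<bar>Dz z (?X \<omega>)\<bar> \<le> A1 * c"
        using Dz_bound[of z "?X \<omega>"] by linarith
      then show "norm (Gz z \<omega> * Dz z (?X \<omega>)) \<le> g z * (A1 * c)"
        using Gzb[of z \<omega>] by (auto simp: abs_mult intro!: mult_mono)
    qed
  qed simp
  have intG: "integrable M (Gz z)" for z
    by (rule integrable_const_bound[where B="g z"]) (use Gzb in auto)
  have eq1: "g (Y' \<omega>) * Dz (Y' \<omega>) (?X \<omega>) = (\<Sum>z\<in>?Z. Gz z \<omega> * Dz z (?X \<omega>))" if "\<omega> \<in> space M" for \<omega>
  proof -
    have "(\<Sum>z\<in>?Z. Gz z \<omega> * Dz z (?X \<omega>)) = (\<Sum>z\<in>?Z. if Y' \<omega> = z then g z * Dz z (?X \<omega>) else 0)"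
      using that by (intro sum.cong) (auto simp: Gz_def S_def indicator_def)
    also have "\<dots> = g (Y' \<omega>) * Dz (Y' \<omega>) (?X \<omega>)" using assms(2) by (simp add: sum.delta')
    finally show ?thesis by simp
  qed
  have eq2: "g (Y' \<omega>) = (\<Sum>z\<in>?Z. Gz z \<omega>)" if "\<omega> \<in> space M" for \<omega>
  proof -
    have "(\<Sum>z\<in>?Z. Gz z \<omega>) = (\<Sum>z\<in>?Z. if Y' \<omega> = z then g z else 0)"
      using that by (intro sum.cong) (auto simp: Gz_def S_def indicator_def)
    also have "\<dots> = g (Y' \<omega>)" using assms(2) by (simp add: sum.delta')
    finally show ?thesis by simp
  qed
  have intS: "integrable M (\<lambda>\<omega>. \<Sum>z\<in>?Z. Gz z \<omega> * Dz z (?X \<omega>))" using intX by auto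
  show int1: "integrable M (\<lambda>\<omega>. g (Y' \<omega>) * Dz (Y' \<omega>) (?X \<omega>))"
  proof -
    have "integrable M (\<lambda>\<omega>. g (Y' \<omega>) * Dz (Y' \<omega>) (?X \<omega>)) \<longleftrightarrow> integrable M (\<lambda>\<omega>. \<Sum>z\<in>?Z. Gz z \<omega> * Dz z (?X \<omega>))"
      by (rule Bochner_Integration.integrable_cong[OF refl eq1])
    then show ?thesis using intS by simp
  qed
  have "(\<integral>\<omega>. g (Y' \<omega>) * Dz (Y' \<omega>) (?X \<omega>) \<partial>M) = (\<integral>\<omega>. (\<Sum>z\<in>?Z. Gz z \<omega> * Dz z (?X \<omega>)) \<partial>M)"
    using eq1 by (intro Bochner_Integration.integral_cong) auto
  also have "\<dots> = (\<Sum>z\<in>?Z. (\<integral>\<omega>. Gz z \<omega> * Dz z (?X \<omega>) \<partial>M))"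
    using intX by (rule Bochner_Integration.integral_sum)
  also have "\<dots> \<le> (\<Sum>z\<in>?Z. mt * (\<integral>\<omega>. Gz z \<omega> \<partial>M))"
  proof (rule sum_mono)
    fix z assume "z \<in> ?Z"
    show "(\<integral>\<omega>. Gz z \<omega> * Dz z (?X \<omega>) \<partial>M) \<le> mt * (\<integral>\<omega>. Gz z \<omega> \<partial>M)"
    proof (cases "z = 0")
      case True
      have "0 \<le> (\<integral>\<omega>. Gz z \<omega> \<partial>M)" using Gzb by (intro integral_nonneg_AE) (auto intro: AE_I2)
      then show ?thesis using True mt_nonneg by (simp add: Dz_def)
    next
      case False
      show ?thesis
        using lin_term[OF GzF Gzb(1) Gzb(2) i] Dz_lin[OF False] by blast
    qed
  qed
  also have "\<dots> = mt * (\<integral>\<omega>. (\<Sum>z\<in>?Z. Gz z \<omega>) \<partial>M)"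
    using intG by (simp add: Bochner_Integration.integral_sum sum_distrib_left)
  also have "(\<integral>\<omega>. (\<Sum>z\<in>?Z. Gz z \<omega>) \<partial>M) = (\<integral>\<omega>. g (Y' \<omega>) \<partial>M)"
    using eq2 by (intro Bochner_Integration.integral_cong) auto
  finally show "(\<integral>\<omega>. g (Y' \<omega>) * Dz (Y' \<omega>) (?X \<omega>) \<partial>M) \<le> mt * (\<integral>\<omega>. g (Y' \<omega>) \<partial>M)" .
qed

end

context LA3 begin

lemma pw:
  fixes y y' xv :: 'b
  assumes y: "norm y \<le> R" and xv: "norm xv \<le> c" and mu: "0 \<le> \<mu>" and d: "0 < \<delta>" "\<delta> < 1"
    and alt: "dist y y' < \<delta> \<or> y' = 0"
  shows "cosh (\<mu> * norm (y + xv)) \<le> cosh (\<mu> * norm y') + \<mu> * (sinh (\<mu> * norm y') * Dz y' xv)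
     + \<mu> * sinh (\<mu> * (R + 1)) * A1 * \<delta>
     + (\<mu>\<^sup>2 * BB / 2 * exp (\<mu> * (c + \<delta>))) * (cosh (\<mu> * norm y') * (norm xv)\<^sup>2 + (2 * c + 1) * \<delta> * cosh (\<mu> * norm y'))
     + cosh (\<mu> * (R + c)) * (if dist y y' < \<delta> then 0 else 1)"
proof -
  have R0: "0 \<le> R" using y norm_ge_zero order.trans by blast
  have Q0: "0 \<le> \<mu>\<^sup>2 * BB / 2 * exp (\<mu> * (c + \<delta>))" using BB_ge1 by simp
  have quadnn: "0 \<le> cosh (\<mu> * norm y') * (norm xv)\<^sup>2 + (2 * c + 1) * \<delta> * cosh (\<mu> * norm y')"
    using c_pos d by (intro add_nonneg_nonneg mult_nonneg_nonneg) auto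
  have lin0: "0 \<le> \<mu> * sinh (\<mu> * (R + 1)) * A1 * \<delta>" using mu R0 A1_ge d by simp
  show ?thesis
  proof (cases "dist y y' < \<delta>")
    case good: True
    define w where "w = xv + (y - y')"
    have core: "cosh (\<mu> * norm (y' + w)) \<le> cosh (\<mu> * norm y')
           + \<mu> * sinh (\<mu> * norm y') * (if y' = 0 then 0 else gateaux1 norm y' w)
           + (\<mu>\<^sup>2 * (A1\<^sup>2 + A2) * (norm w)\<^sup>2 / 2) * cosh (\<mu> * norm y') * exp (\<mu> * norm w)"
      by (rule cosh_norm_taylor[OF A1_diff A1_d1 A1_d2 A1_ge less_imp_le[OF A2_pos] mu])
    have e1: "y' + w = y + xv" unfolding w_def by (simp add: algebra_simps)
    have e2: "(if y' = 0 then 0 else gateaux1 norm y' w) = Dz y' xv + Dz y' (y - y')"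
      unfolding w_def Dz_add[symmetric] by (simp add: Dz_def)
    have ny: "norm (y - y') < \<delta>" using good by (simp add: dist_norm)
    have ny': "norm y' \<le> R + 1"
    proof -
      have "norm y' \<le> norm y + norm (y - y')" by (metis norm_triangle_sub add.commute norm_minus_commute)
      then show ?thesis using y ny d by linarith
    qed
    have s0: "0 \<le> sinh (\<mu> * norm y')" using mu by simp
    have s1: "sinh (\<mu> * norm y') \<le> sinh (\<mu> * (R + 1))" using mu ny' by (simp add: mult_left_mono)
    have t1: "\<mu> * sinh (\<mu> * norm y') * Dz y' (y - y') \<le> \<mu> * sinh (\<mu> * (R + 1)) * A1 * \<delta>"
    proof -
      have "Dz y' (y - y') \<le> A1 * \<delta>"
        using Dz_bound[of y' "y - y'"] ny A1_ge by (smt (verit) mult_left_mono)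
      then have "\<mu> * sinh (\<mu> * norm y') * Dz y' (y - y') \<le> \<mu> * sinh (\<mu> * norm y') * (A1 * \<delta>)"
        using mu s0 by (intro mult_left_mono) auto
      also have "\<dots> \<le> \<mu> * sinh (\<mu> * (R + 1)) * (A1 * \<delta>)"
        using mu s1 A1_ge d by (intro mult_right_mono mult_left_mono) auto
      finally show ?thesis by (simp add: mult_ac)
    qed
    have nw: "norm w \<le> norm xv + \<delta>"
      unfolding w_def using norm_triangle_ineq[of xv "y - y'"] ny by linarith
    have nw2: "(norm w)\<^sup>2 \<le> (norm xv)\<^sup>2 + (2 * c + 1) * \<delta>"
    proof -
      have "(norm w)\<^sup>2 \<le> (norm xv + \<delta>)\<^sup>2" using nw by (intro power_mono) auto
      also have "\<dots> = (norm xv)\<^sup>2 + 2 * norm xv * \<delta> + \<delta> * \<delta>" by (simp add: power2_eq_square algebra_simps)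
      also have "2 * norm xv * \<delta> \<le> 2 * c * \<delta>" using xv d by (intro mult_right_mono) auto
      also have "\<delta> * \<delta> \<le> 1 * \<delta>" using d by (intro mult_right_mono) auto
      finally show ?thesis by (simp add: algebra_simps)
    qed
    have ew: "exp (\<mu> * norm w) \<le> exp (\<mu> * (c + \<delta>))"
      using nw xv mu by (simp add: mult_left_mono)
    have t2: "(\<mu>\<^sup>2 * (A1\<^sup>2 + A2) * (norm w)\<^sup>2 / 2) * cosh (\<mu> * norm y') * exp (\<mu> * norm w)
        \<le> (\<mu>\<^sup>2 * BB / 2 * exp (\<mu> * (c + \<delta>))) * (cosh (\<mu> * norm y') * (norm xv)\<^sup>2 + (2 * c + 1) * \<delta> * cosh (\<mu> * norm y'))"
    proof -
      let ?q = "\<mu>\<^sup>2 * BB / 2"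
      have q0: "0 \<le> ?q" using BB_ge1 by simp
      have "(\<mu>\<^sup>2 * (A1\<^sup>2 + A2) * (norm w)\<^sup>2 / 2) * cosh (\<mu> * norm y') * exp (\<mu> * norm w)
          = ?q * ((norm w)\<^sup>2 * (cosh (\<mu> * norm y') * exp (\<mu> * norm w)))" unfolding BB_def by (simp add: mult_ac)
      also have "\<dots> \<le> ?q * (((norm xv)\<^sup>2 + (2 * c + 1) * \<delta>) * (cosh (\<mu> * norm y') * exp (\<mu> * (c + \<delta>))))"
        using q0 nw2 ew c_pos d by (intro mult_left_mono mult_mono) auto
      also have "\<dots> = (\<mu>\<^sup>2 * BB / 2 * exp (\<mu> * (c + \<delta>))) * (cosh (\<mu> * norm y') * (norm xv)\<^sup>2 + (2 * c + 1) * \<delta> * cosh (\<mu> * norm y'))"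
        by (simp add: algebra_simps)
      finally show ?thesis .
    qed
    have "cosh (\<mu> * norm (y + xv)) \<le> cosh (\<mu> * norm y') + \<mu> * sinh (\<mu> * norm y') * (Dz y' xv + Dz y' (y - y'))
           + (\<mu>\<^sup>2 * (A1\<^sup>2 + A2) * (norm w)\<^sup>2 / 2) * cosh (\<mu> * norm y') * exp (\<mu> * norm w)"
      using core unfolding e1 e2 .
    then have core2: "cosh (\<mu> * norm (y + xv)) \<le> cosh (\<mu> * norm y') + \<mu> * (sinh (\<mu> * norm y') * Dz y' xv) + \<mu> * sinh (\<mu> * norm y') * Dz y' (y - y')
           + (\<mu>\<^sup>2 * (A1\<^sup>2 + A2) * (norm w)\<^sup>2 / 2) * cosh (\<mu> * norm y') * exp (\<mu> * norm w)"
      by (simp add: distrib_left mult.assoc)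
    have "cosh (\<mu> * (R + c)) * (if dist y y' < \<delta> then 0 else 1) = (0::real)" using good by simp
    then show ?thesis using core2 t1 t2 by linarith
  next
    case bad: False
    then have y0: "y' = 0" using alt by blast
    have "norm (y + xv) \<le> R + c" using y xv norm_triangle_ineq[of y xv] by linarith
    then have "cosh (\<mu> * norm (y + xv)) \<le> cosh (\<mu> * (R + c))"
      using mu R0 c_pos by (subst cosh_real_nonneg_le_iff) (auto intro: mult_left_mono)
    moreover have "0 \<le> (\<mu>\<^sup>2 * BB / 2 * exp (\<mu> * (c + \<delta>))) * (cosh (\<mu> * norm y') * (norm xv)\<^sup>2 + (2 * c + 1) * \<delta> * cosh (\<mu> * norm y'))"
      using Q0 quadnn by simp
    ultimately show ?thesis using bad y0 lin0 by (simp add: Dz_def)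
  qed
qed

end

context LA3 begin

lemma step_delta:
  assumes Y: "Y \<in> borel_measurable (F i)" "\<And>\<omega>. \<omega> \<in> space M \<Longrightarrow> norm (Y \<omega>) \<le> R"
    and i: "1 \<le> i" and mu: "0 \<le> \<mu>" and d: "0 < \<delta>" "\<delta> < 1"
  shows "(\<integral>\<omega>. cosh (\<mu> * norm (Y \<omega> + X (i + k) \<omega>)) \<partial>M)
     \<le> exp (\<mu> * \<delta>) * (\<integral>\<omega>. cosh (\<mu> * norm (Y \<omega>)) \<partial>M)
          * (1 + \<mu> * mt + (\<mu>\<^sup>2 * BB / 2 * exp (\<mu> * (c + \<delta>))) * (st2 + (2 * c + 1) * \<delta>))
       + \<mu> * sinh (\<mu> * (R + 1)) * A1 * \<delta> + cosh (\<mu> * (R + c)) * \<delta>"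
proof -
  have fm: "finite_measure M" by (rule finite_measureI) simp
  obtain Y' where Y': "Y' \<in> borel_measurable (F i)" "finite (range Y')"
      "\<forall>\<omega>. dist (Y \<omega>) (Y' \<omega>) < \<delta> \<or> Y' \<omega> = 0"
      "measure M {\<omega> \<in> space M. \<not> dist (Y \<omega>) (Y' \<omega>) < \<delta>} \<le> \<delta>"
    using finite_approx[OF Y(1) F_subalg fm d(1) d(1)] by blast
  have Y'M [measurable]: "Y' \<in> borel_measurable M" using measurable_from_subalg[OF F_subalg Y'(1)] .
  have YM [measurable]: "Y \<in> borel_measurable M" using measurable_from_subalg[OF F_subalg Y(1)] .
  have XM [measurable]: "X (i + k) \<in> borel_measurable M" by (rule meas)
  have R0: "0 \<le> R"
  proof -
    obtain \<omega> where "\<omega> \<in> space M" using not_empty by blast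
    then show ?thesis using Y(2) norm_ge_zero order.trans by blast
  qed
  define bad where "bad = {\<omega> \<in> space M. \<not> dist (Y \<omega>) (Y' \<omega>) < \<delta>}"
  have bad_sets [measurable]: "bad \<in> sets M" unfolding bad_def by measurable
  define Q where "Q = \<mu>\<^sup>2 * BB / 2 * exp (\<mu> * (c + \<delta>))"
  define Sm where "Sm = sinh (\<mu> * (R + 1))"
  define Kb where "Kb = cosh (\<mu> * (R + c))"
  have Q0: "0 \<le> Q" unfolding Q_def using BB_ge1 by simp
  have Kb0: "0 \<le> Kb" unfolding Kb_def by simp
  have ny': "norm (Y' \<omega>) \<le> R + 1" if "\<omega> \<in> space M" for \<omega>
  proof (cases "Y' \<omega> = 0")
    case False
    then have "dist (Y \<omega>) (Y' \<omega>) < \<delta>" using Y'(3) by blast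
    then have "norm (Y' \<omega>) \<le> norm (Y \<omega>) + \<delta>"
      by (metis dist_norm norm_minus_commute norm_triangle_sub add_le_cancel_left less_imp_le order.trans add.commute)
    then show ?thesis using Y(2)[OF that] d by linarith
  qed (use R0 in simp)
  have nX: "norm (X (i + k) \<omega>) \<le> c" if "\<omega> \<in> space M" for \<omega> using bounded[of "i + k" \<omega>] i that by simp
  define c' where "c' \<omega> = cosh (\<mu> * norm (Y' \<omega>))" for \<omega>
  define L where "L \<omega> = sinh (\<mu> * norm (Y' \<omega>)) * Dz (Y' \<omega>) (X (i + k) \<omega>)" for \<omega>
  define q where "q \<omega> = c' \<omega> * (norm (X (i + k) \<omega>))\<^sup>2" for \<omega>
  have c'M [measurable]: "c' \<in> borel_measurable M" unfolding c'_def by measurable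
  have c'F: "c' \<in> borel_measurable (F i)" unfolding c'_def using Y'(1) by measurable
  have c'b: "\<bar>c' \<omega>\<bar> \<le> cosh (\<mu> * (R + 1))" "0 \<le> c' \<omega>" if "\<omega> \<in> space M" for \<omega>
    unfolding c'_def using ny'[OF that] mu R0
    by (auto simp: cosh_real_nonneg_le_iff mult_left_mono)
  have intc: "integrable M c'"
    by (rule integrable_const_bound[where B="cosh (\<mu> * (R + 1))"]) (use c'b in auto)
  have Lfin: "integrable M L" "(\<integral>\<omega>. L \<omega> \<partial>M) \<le> mt * (\<integral>\<omega>. sinh (\<mu> * norm (Y' \<omega>)) \<partial>M)"
    unfolding L_def using lin_fin[OF Y'(1,2) i, of "\<lambda>y. sinh (\<mu> * norm y)"] mu by auto
  have intq: "integrable M q"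
  proof (rule integrable_const_bound[where B="cosh (\<mu> * (R + 1)) * c\<^sup>2"])
    show "AE \<omega> in M. norm (q \<omega>) \<le> cosh (\<mu> * (R + 1)) * c\<^sup>2"
    proof (intro AE_I2)
      fix \<omega> assume \<omega>: "\<omega> \<in> space M"
      have "(norm (X (i + k) \<omega>))\<^sup>2 \<le> c\<^sup>2" using nX[OF \<omega>] by (intro power_mono) auto
      then show "norm (q \<omega>) \<le> cosh (\<mu> * (R + 1)) * c\<^sup>2"
        unfolding q_def using c'b[OF \<omega>] by (auto simp: abs_mult intro!: mult_mono)
    qed
  qed (unfold q_def, measurable)
  have intind: "integrable M (indicator bad :: 'w \<Rightarrow> real)" using bad_sets by (intro integrable_const_bound[where B=1]) (auto simp: indicator_def)
  have intLHS: "integrable M (\<lambda>\<omega>. cosh (\<mu> * norm (Y \<omega> + X (i + k) \<omega>)))"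
  proof (rule integrable_const_bound[where B=Kb])
    show "AE \<omega> in M. norm (cosh (\<mu> * norm (Y \<omega> + X (i + k) \<omega>))) \<le> Kb"
    proof (intro AE_I2)
      fix \<omega> assume \<omega>: "\<omega> \<in> space M"
      have "norm (Y \<omega> + X (i + k) \<omega>) \<le> R + c"
        using Y(2)[OF \<omega>] nX[OF \<omega>] norm_triangle_ineq[of "Y \<omega>" "X (i + k) \<omega>"] by linarith
      then show "norm (cosh (\<mu> * norm (Y \<omega> + X (i + k) \<omega>))) \<le> Kb"
        unfolding Kb_def using mu R0 c_pos by (auto simp: cosh_real_nonneg_le_iff mult_left_mono)
    qed
  qed simp
  define RHSf where "RHSf \<omega> = c' \<omega> + \<mu> * L \<omega> + \<mu> * Sm * A1 * \<delta> + Q * (q \<omega> + (2 * c + 1) * \<delta> * c' \<omega>) + Kb * indicator bad \<omega>" for \<omega>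
  have pwb: "cosh (\<mu> * norm (Y \<omega> + X (i + k) \<omega>)) \<le> RHSf \<omega>" if \<omega>: "\<omega> \<in> space M" for \<omega>
  proof -
    have ind: "indicator bad \<omega> = (if dist (Y \<omega>) (Y' \<omega>) < \<delta> then 0 else (1::real))"
      unfolding bad_def using \<omega> by (auto simp: indicator_def)
    show ?thesis
      using pw[OF Y(2)[OF \<omega>] nX[OF \<omega>] mu d, of "Y' \<omega>"] Y'(3)
      unfolding RHSf_def c'_def L_def q_def Q_def Sm_def Kb_def ind by (simp add: algebra_simps)
  qed
  have intR: "integrable M RHSf" unfolding RHSf_def using intc Lfin(1) intq intind by auto
  define H where "H = (\<integral>\<omega>. cosh (\<mu> * norm (Y \<omega> + X (i + k) \<omega>)) \<partial>M)"
  define EY where "EY = (\<integral>\<omega>. cosh (\<mu> * norm (Y \<omega>)) \<partial>M)"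
  define Ic where "Ic = (\<integral>\<omega>. c' \<omega> \<partial>M)"
  define IL where "IL = (\<integral>\<omega>. L \<omega> \<partial>M)"
  define Iq where "Iq = (\<integral>\<omega>. q \<omega> \<partial>M)"
  define mb where "mb = measure M bad"
  have "H \<le> (\<integral>\<omega>. RHSf \<omega> \<partial>M)" unfolding H_def using intLHS intR pwb by (rule integral_mono)
  also have "(\<integral>\<omega>. RHSf \<omega> \<partial>M) = Ic + \<mu> * IL + \<mu> * Sm * A1 * \<delta> + Q * (Iq + (2 * c + 1) * \<delta> * Ic) + Kb * mb"
    unfolding RHSf_def Ic_def IL_def Iq_def mb_def using intc Lfin(1) intq intind bad_sets by (simp add: prob_space)
  finally have H1: "H \<le> Ic + \<mu> * IL + \<mu> * Sm * A1 * \<delta> + Q * (Iq + (2 * c + 1) * \<delta> * Ic) + Kb * mb" .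
  have IL1: "IL \<le> mt * Ic"
  proof -
    have "(\<integral>\<omega>. sinh (\<mu> * norm (Y' \<omega>)) \<partial>M) \<le> Ic"
    proof -
      have "integrable M (\<lambda>\<omega>. sinh (\<mu> * norm (Y' \<omega>)))"
      proof (rule integrable_const_bound[where B="cosh (\<mu> * (R + 1))"])
        show "AE \<omega> in M. norm (sinh (\<mu> * norm (Y' \<omega>))) \<le> cosh (\<mu> * (R + 1))"
        proof (intro AE_I2)
          fix \<omega> assume \<omega>: "\<omega> \<in> space M"
          have "0 \<le> sinh (\<mu> * norm (Y' \<omega>))" using mu by simp
          moreover have "sinh (\<mu> * norm (Y' \<omega>)) \<le> cosh (\<mu> * norm (Y' \<omega>))" by (rule sinh_le_cosh_real)
          ultimately show "norm (sinh (\<mu> * norm (Y' \<omega>))) \<le> cosh (\<mu> * (R + 1))"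
            using c'b[OF \<omega>] unfolding c'_def by simp
        qed
      qed simp
      then show ?thesis unfolding Ic_def c'_def
        by (intro integral_mono intc[unfolded c'_def]) (auto simp: sinh_le_cosh_real)
    qed
    then show ?thesis using Lfin(2) mt_nonneg unfolding IL_def by (smt (verit) mult_left_mono)
  qed
  have Iq1: "Iq \<le> st2 * Ic" unfolding Iq_def Ic_def q_def
    using sq_term[OF c'F c'b(1) c'b(2) i] by simp
  have mb1: "mb \<le> \<delta>" unfolding mb_def bad_def using Y'(4) .
  have Ic1: "Ic \<le> exp (\<mu> * \<delta>) * EY"
  proof -
    have "Ic \<le> (\<integral>\<omega>. exp (\<mu> * \<delta>) * cosh (\<mu> * norm (Y \<omega>)) \<partial>M)"
      unfolding Ic_def
    proof (rule integral_mono[OF intc])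
      show "integrable M (\<lambda>\<omega>. exp (\<mu> * \<delta>) * cosh (\<mu> * norm (Y \<omega>)))"
        by (rule integrable_const_bound[where B="exp (\<mu> * \<delta>) * cosh (\<mu> * R)"])
           (use Y(2) mu R0 in \<open>auto simp: cosh_real_nonneg_le_iff mult_left_mono\<close>)
      fix \<omega> assume \<omega>: "\<omega> \<in> space M"
      show "c' \<omega> \<le> exp (\<mu> * \<delta>) * cosh (\<mu> * norm (Y \<omega>))"
      proof (cases "Y' \<omega> = 0")
        case True
        have e1: "1 \<le> exp (\<mu> * \<delta>)" using mu d by simp
        have "1 * 1 \<le> exp (\<mu> * \<delta>) * cosh (\<mu> * norm (Y \<omega>))"
          using e1 cosh_real_ge_1[of "\<mu> * norm (Y \<omega>)"] by (intro mult_mono) auto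
        then have "1 \<le> exp (\<mu> * \<delta>) * cosh (\<mu> * norm (Y \<omega>))" by simp
        then show ?thesis unfolding c'_def using True by simp
      next
        case False
        then have "dist (Y \<omega>) (Y' \<omega>) < \<delta>" using Y'(3) by blast
        then have "norm (Y' \<omega>) \<le> norm (Y \<omega>) + \<delta>"
          by (metis dist_norm norm_minus_commute norm_triangle_sub add_le_cancel_left less_imp_le order.trans add.commute)
        then have "cosh (\<mu> * norm (Y' \<omega>)) \<le> cosh (\<mu> * norm (Y \<omega>) + \<mu> * \<delta>)"
          using mu d by (subst cosh_real_nonneg_le_iff) (auto simp: distrib_left[symmetric] mult_left_mono)
        also have "\<dots> \<le> cosh (\<mu> * norm (Y \<omega>)) * exp (\<mu> * \<delta>)" using mu d by (intro cosh_add_le_exp) simp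
        finally show ?thesis unfolding c'_def by (simp add: mult.commute)
      qed
    qed
    also have "\<dots> = exp (\<mu> * \<delta>) * EY" unfolding EY_def by simp
    finally show ?thesis .
  qed
  let ?Fc = "1 + \<mu> * mt + Q * (st2 + (2 * c + 1) * \<delta>)"
  have Fc0: "0 \<le> ?Fc" using mu mt_nonneg Q0 st2_pos c_pos d by (intro add_nonneg_nonneg mult_nonneg_nonneg) auto
  have a1: "\<mu> * IL \<le> \<mu> * (mt * Ic)" using IL1 mu by (rule mult_left_mono)
  have a2: "Q * Iq \<le> Q * (st2 * Ic)" using Iq1 Q0 by (rule mult_left_mono)
  have a3: "Kb * mb \<le> Kb * \<delta>" using mb1 Kb0 by (rule mult_left_mono)
  have "H \<le> Ic * ?Fc + \<mu> * Sm * A1 * \<delta> + Kb * \<delta>"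
  proof -
    have "Ic + \<mu> * (mt * Ic) + \<mu> * Sm * A1 * \<delta> + (Q * (st2 * Ic) + Q * ((2 * c + 1) * \<delta> * Ic)) + Kb * \<delta>
        = Ic * ?Fc + \<mu> * Sm * A1 * \<delta> + Kb * \<delta>" by (simp add: algebra_simps)
    moreover have "Q * (Iq + (2 * c + 1) * \<delta> * Ic) = Q * Iq + Q * ((2 * c + 1) * \<delta> * Ic)" by (simp add: algebra_simps)
    ultimately show ?thesis using H1 a1 a2 a3 by linarith
  qed
  also have "Ic * ?Fc \<le> (exp (\<mu> * \<delta>) * EY) * ?Fc" using Ic1 Fc0 by (rule mult_right_mono)
  finally show ?thesis unfolding H_def EY_def Q_def Sm_def Kb_def by (simp add: mult_ac)
qed

end

context LA3 begin

definition "rho \<mu> = 1 + \<mu> * mt + \<mu>\<^sup>2 * BB * st2 * exp (\<mu> * c) / 2"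

lemma rho_nonneg: "0 \<le> \<mu> \<Longrightarrow> 0 \<le> rho \<mu>"
  unfolding rho_def using mt_nonneg BB_ge1 st2_pos by (intro add_nonneg_nonneg) auto

lemma step:
  assumes Y: "Y \<in> borel_measurable (F i)" "\<And>\<omega>. \<omega> \<in> space M \<Longrightarrow> norm (Y \<omega>) \<le> R"
    and i: "1 \<le> i" and mu: "0 \<le> \<mu>"
  shows "(\<integral>\<omega>. cosh (\<mu> * norm (Y \<omega> + X (i + k) \<omega>)) \<partial>M) \<le> (\<integral>\<omega>. cosh (\<mu> * norm (Y \<omega>)) \<partial>M) * rho \<mu>"
proof -
  define EY where "EY = (\<integral>\<omega>. cosh (\<mu> * norm (Y \<omega>)) \<partial>M)"
  define f where "f \<delta> = exp (\<mu> * \<delta>) * EY * (1 + \<mu> * mt + (\<mu>\<^sup>2 * BB / 2 * exp (\<mu> * (c + \<delta>))) * (st2 + (2 * c + 1) * \<delta>))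
       + \<mu> * sinh (\<mu> * (R + 1)) * A1 * \<delta> + cosh (\<mu> * (R + c)) * \<delta>" for \<delta>
  have lim: "(f \<longlongrightarrow> f 0) (at_right 0)"
    unfolding f_def by (intro tendsto_intros)
  have ev: "\<forall>\<^sub>F \<delta> in at_right 0. (\<integral>\<omega>. cosh (\<mu> * norm (Y \<omega> + X (i + k) \<omega>)) \<partial>M) \<le> f \<delta>"
  proof (rule eventually_at_rightI[of 0 1])
    fix \<delta> :: real assume "\<delta> \<in> {0<..<1}"
    then show "(\<integral>\<omega>. cosh (\<mu> * norm (Y \<omega> + X (i + k) \<omega>)) \<partial>M) \<le> f \<delta>"
      unfolding f_def EY_def using step_delta[OF Y i mu] by auto
  qed simp
  have "(\<integral>\<omega>. cosh (\<mu> * norm (Y \<omega> + X (i + k) \<omega>)) \<partial>M) \<le> f 0"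
    by (rule tendsto_le[OF trivial_limit_at_right_real lim tendsto_const ev])
  also have "f 0 = EY * rho \<mu>" unfolding f_def rho_def by (simp add: algebra_simps power2_eq_square)
  finally show ?thesis unfolding EY_def .
qed

definition T :: "nat \<Rightarrow> nat \<Rightarrow> 'w \<Rightarrow> 'b" where "T j p \<omega> = (\<Sum>q<p. X (j + q * k) \<omega>)"

lemma first_term:
  assumes j: "1 \<le> j" and mu: "0 \<le> \<mu>"
  shows "(\<integral>\<omega>. cosh (\<mu> * norm (X j \<omega>)) \<partial>M) \<le> rho \<mu>"
proof -
  have XM [measurable]: "X j \<in> borel_measurable M" by (rule meas)
  have nX: "norm (X j \<omega>) \<le> c" if "\<omega> \<in> space M" for \<omega> using bounded[OF j that] .
  let ?Q = "\<mu>\<^sup>2 * BB / 2 * exp (\<mu> * c)"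
  have pt: "cosh (\<mu> * norm (X j \<omega>)) \<le> 1 + ?Q * (norm (X j \<omega>))\<^sup>2" if \<omega>: "\<omega> \<in> space M" for \<omega>
  proof -
    have core: "cosh (\<mu> * norm (0 + X j \<omega>)) \<le> cosh (\<mu> * norm (0::'b)) + \<mu> * sinh (\<mu> * norm (0::'b)) * (if (0::'b) = 0 then 0 else gateaux1 norm 0 (X j \<omega>))
       + (\<mu>\<^sup>2 * (A1\<^sup>2 + A2) * (norm (X j \<omega>))\<^sup>2 / 2) * cosh (\<mu> * norm (0::'b)) * exp (\<mu> * norm (X j \<omega>))"
      by (rule cosh_norm_taylor[OF A1_diff A1_d1 A1_d2 A1_ge less_imp_le[OF A2_pos] mu])
    have "exp (\<mu> * norm (X j \<omega>)) \<le> exp (\<mu> * c)" using nX[OF \<omega>] mu by (simp add: mult_left_mono)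
    then have "(\<mu>\<^sup>2 * BB * (norm (X j \<omega>))\<^sup>2 / 2) * exp (\<mu> * norm (X j \<omega>)) \<le> (\<mu>\<^sup>2 * BB * (norm (X j \<omega>))\<^sup>2 / 2) * exp (\<mu> * c)"
      using BB_ge1 by (intro mult_left_mono) auto
    then show ?thesis using core unfolding BB_def by (simp add: mult_ac)
  qed
  have intX2: "integrable M (\<lambda>\<omega>. (norm (X j \<omega>))\<^sup>2)"
  proof (rule integrable_const_bound[where B="c\<^sup>2"])
    show "AE \<omega> in M. norm ((norm (X j \<omega>))\<^sup>2) \<le> c\<^sup>2"
      using nX by (intro AE_I2) (auto intro!: power_mono)
  qed simp
  have "(\<integral>\<omega>. cosh (\<mu> * norm (X j \<omega>)) \<partial>M) \<le> (\<integral>\<omega>. 1 + ?Q * (norm (X j \<omega>))\<^sup>2 \<partial>M)"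
  proof (rule integral_mono[OF _ _ pt])
    show "integrable M (\<lambda>\<omega>. cosh (\<mu> * norm (X j \<omega>)))"
      by (rule integrable_const_bound[where B="cosh (\<mu> * c)"])
         (use nX mu c_pos in \<open>auto simp: cosh_real_nonneg_le_iff mult_left_mono\<close>)
    show "integrable M (\<lambda>\<omega>. 1 + ?Q * (norm (X j \<omega>))\<^sup>2)" using intX2 by auto
  qed
  also have "\<dots> = 1 + ?Q * (\<integral>\<omega>. (norm (X j \<omega>))\<^sup>2 \<partial>M)" using intX2 by (simp add: prob_space)
  also have "\<dots> \<le> 1 + ?Q * st2"
  proof -
    have "(\<integral>\<omega>. (norm (X j \<omega>))\<^sup>2 \<partial>M) \<le> st2"
      using A2_var[OF j] C2_nonneg Phi_nonneg unfolding st2_def by (smt (verit) mult_nonneg_nonneg)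
    moreover have "0 \<le> ?Q" using BB_ge1 by simp
    ultimately show ?thesis by (simp add: mult_left_mono)
  qed
  also have "\<dots> \<le> rho \<mu>" unfolding rho_def using mu mt_nonneg by (simp add: mult_ac)
  finally show ?thesis .
qed

lemma T_meas: "1 \<le> j \<Longrightarrow> T j (Suc p) \<in> borel_measurable (F (j + p * k))"
  unfolding T_def
proof (intro borel_measurable_sum)
  fix q assume "1 \<le> j" "q \<in> {..<Suc p}"
  then show "X (j + q * k) \<in> borel_measurable (F (j + p * k))"
    by (intro X_F_meas) auto
qed

lemma T_bound: "1 \<le> j \<Longrightarrow> \<omega> \<in> space M \<Longrightarrow> norm (T j p \<omega>) \<le> real p * c"
proof -
  assume j: "1 \<le> j" and \<omega>: "\<omega> \<in> space M"
  have "norm (T j p \<omega>) \<le> (\<Sum>q<p. norm (X (j + q * k) \<omega>))" unfolding T_def by (rule norm_sum)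
  also have "\<dots> \<le> (\<Sum>q<p. c)" using j \<omega> by (intro sum_mono bounded) auto
  finally show ?thesis by simp
qed

lemma stride:
  assumes j: "1 \<le> j" and mu: "0 \<le> \<mu>"
  shows "(\<integral>\<omega>. cosh (\<mu> * norm (T j p \<omega>)) \<partial>M) \<le> rho \<mu> ^ p"
proof (induction p)
  case 0 then show ?case by (simp add: T_def prob_space)
next
  case (Suc p)
  show ?case
  proof (cases p)
    case 0
    then show ?thesis using first_term[OF j mu] by (simp add: T_def)
  next
    case (Suc p')
    have e: "T j (Suc p) \<omega> = T j p \<omega> + X ((j + p' * k) + k) \<omega>" for \<omega>
      unfolding T_def using Suc by (simp add: algebra_simps)
    have "(\<integral>\<omega>. cosh (\<mu> * norm (T j (Suc p) \<omega>)) \<partial>M) \<le> (\<integral>\<omega>. cosh (\<mu> * norm (T j p \<omega>)) \<partial>M) * rho \<mu>"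
    proof -
      have Tm: "T j p \<in> borel_measurable (F (j + p' * k))" using T_meas[OF j, of p'] Suc by simp
      have Tb: "\<And>\<omega>. \<omega> \<in> space M \<Longrightarrow> norm (T j p \<omega>) \<le> real p * c" using T_bound[OF j] .
      have i1: "1 \<le> j + p' * k" using j by simp
      show ?thesis unfolding e using step[OF Tm Tb i1 mu] .
    qed
    also have "\<dots> \<le> rho \<mu> ^ p * rho \<mu>" using Suc.IH rho_nonneg[OF mu] by (rule mult_right_mono)
    finally show ?thesis by (simp add: mult.commute)
  qed
qed

end

lemma sum_stride_reindex:
  fixes f :: "nat \<Rightarrow> 'a::comm_monoid_add"
  assumes k: "1 \<le> k" and kn: "k \<le> n"
  shows "(\<Sum>i\<in>{1..n}. f i) = (\<Sum>j\<in>{1..k}. \<Sum>q<(n - j) div k + 1. f (j + q * k))"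
proof -
  let ?L = "\<lambda>j. (n - j) div k + 1"
  let ?S = "Sigma {1..k} (\<lambda>j. {..<?L j})"
  let ?h = "\<lambda>(j, q). j + q * k"
  let ?g = "\<lambda>i. ((i - 1) mod k + 1, (i - 1) div k)"
  have bij: "bij_betw ?h ?S {1..n}"
  proof (rule bij_betwI[where g = ?g])
    show "?h \<in> ?S \<rightarrow> {1..n}"
    proof
      fix x assume "x \<in> ?S"
      then obtain j q where x: "x = (j, q)" "1 \<le> j" "j \<le> k" "q < ?L j" by auto
      then have "q \<le> (n - j) div k" by simp
      then have "q * k \<le> (n - j) div k * k" by simp
      also have "\<dots> \<le> n - j" by (metis div_mult_mod_eq le_add1)
      finally show "?h x \<in> {1..n}" using x kn by auto
    qed
    show "?g \<in> {1..n} \<rightarrow> ?S"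
    proof
      fix i assume i: "i \<in> {1..n}"
      let ?j = "(i - 1) mod k + 1" and ?q = "(i - 1) div k"
      have j1: "1 \<le> ?j" "?j \<le> k" using k by (auto simp: Suc_le_eq)
      have ij: "i = ?j + ?q * k" using i by (simp add: mod_div_mult_eq[symmetric])
      have qe: "?q * k = i - ?j" using ij by (metis add_diff_cancel_left')
      have "i - ?j \<le> n - ?j" using i by (intro diff_le_mono) auto
      then have "?q * k \<le> n - ?j" using qe by simp
      then have "?q * k div k \<le> (n - ?j) div k" by (rule div_le_mono)
      then have "?q \<le> (n - ?j) div k" using k by simp
      then show "?g i \<in> ?S" using j1 by auto
    qed
    show "?g (?h x) = x" if "x \<in> ?S" for x
    proof -
      obtain j q where x: "x = (j, q)" "1 \<le> j" "j \<le> k" using \<open>x \<in> ?S\<close> by auto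
      obtain m where m: "j = Suc m" using x(2) by (cases j) auto
      have mk: "m < k" using m x(3) by simp
      have e: "j + q * k - 1 = m + q * k" using m by simp
      have "(m + q * k) mod k = m" using mk by simp
      moreover have "(m + q * k) div k = q" using mk by simp
      ultimately show ?thesis using x(1) e m by simp
    qed
    show "?h (?g i) = i" if "i \<in> {1..n}" for i
      using that by (simp add: mod_div_mult_eq)
  qed
  have "(\<Sum>j\<in>{1..k}. \<Sum>q<?L j. f (j + q * k)) = (\<Sum>x\<in>?S. f (?h x))"
  proof -
    have "(\<Sum>j\<in>{1..k}. \<Sum>q<?L j. f (j + q * k)) = (\<Sum>x\<in>?S. case x of (j, q) \<Rightarrow> f (j + q * k))"
      by (subst sum.Sigma) auto
    also have "\<dots> = (\<Sum>x\<in>?S. f (?h x))" by (intro sum.cong refl) (auto split: prod.splits)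
    finally show ?thesis .
  qed
  also have "\<dots> = (\<Sum>i\<in>{1..n}. f i)" using sum.reindex_bij_betw[OF bij] .
  finally show ?thesis by simp
qed

lemma exp_bound_aux:
  fixes D s :: real
  assumes D: "0 < D" and s: "0 \<le> s"
  shows "D * exp (3 * s / (2 * (D + s))) \<le> 2 * (D + s)"
proof -
  define z where "z = 3 * s / (4 * (D + s))"
  have z0: "0 \<le> z" unfolding z_def using D s by simp
  have z1: "z < 1" unfolding z_def using D s by (simp add: field_simps)
  have "1 - z \<le> exp (- z)" using exp_ge_add_one_self[of "-z"] by simp
  then have ez: "exp z \<le> 1 / (1 - z)" using z1 by (simp add: exp_minus field_simps)
  have Ds: "D + s \<noteq> 0" using D s by simp
  have gen: "\<And>X::real. X \<noteq> 0 \<Longrightarrow> 3 * s / (2 * X) = 3 * s / (4 * X) + 3 * s / (4 * X)"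
    by (simp add: add_divide_distrib[symmetric])
  have zz: "3 * s / (2 * (D + s)) = z + z" unfolding z_def by (rule gen[OF Ds])
  have "exp (3 * s / (2 * (D + s))) = (exp z)\<^sup>2"
    unfolding zz exp_add by (simp add: power2_eq_square)
  also have "\<dots> \<le> (1 / (1 - z))\<^sup>2" using ez by (intro power_mono) auto
  also have "1 - z = (4 * D + s) / (4 * (D + s))" unfolding z_def using D s by (simp add: field_simps)
  finally have e: "exp (3 * s / (2 * (D + s))) \<le> (4 * (D + s) / (4 * D + s))\<^sup>2" by simp
  have "D * (4 * (D + s) / (4 * D + s))\<^sup>2 \<le> 2 * (D + s)"
  proof -
    have p: "0 < 4 * D + s" using D s by simp
    have h: "8 * D * (D + s) \<le> (4 * D + s)\<^sup>2" by (simp add: power2_eq_square algebra_simps)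
    have h2: "2 * (D + s) * (8 * D * (D + s)) \<le> 2 * (D + s) * (4 * D + s)\<^sup>2"
      using h D s by (intro mult_left_mono) auto
    have eq: "2 * (D + s) * (8 * D * (D + s)) = D * (16 * (D + s)\<^sup>2)" by (simp add: power2_eq_square algebra_simps)
    have h3: "D * (16 * (D + s)\<^sup>2) \<le> (4 * D + s)\<^sup>2 * (2 * (D + s))" using h2 unfolding eq by (simp only: mult.commute)
    have eq2: "D * (4 * (D + s) / (4 * D + s))\<^sup>2 = D * (16 * (D + s)\<^sup>2) / (4 * D + s)\<^sup>2"
      by (simp add: power_divide power_mult_distrib power2_eq_square algebra_simps)
    have p2: "0 < (4 * D + s)\<^sup>2" using p by simp
    show ?thesis unfolding eq2 using h3 p2 by (simp add: divide_le_eq mult.commute)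
  qed
  moreover have "D * exp (3 * s / (2 * (D + s))) \<le> D * (4 * (D + s) / (4 * D + s))\<^sup>2"
    using e D by (simp add: mult_left_mono)
  ultimately show ?thesis by linarith
qed

lemma cosh_jensen:
  fixes w a :: "nat \<Rightarrow> real"
  assumes "finite S" "S \<noteq> {}" "sum w S = 1" "\<And>i. i \<in> S \<Longrightarrow> 0 \<le> w i"
  shows "cosh (\<Sum>i\<in>S. w i * a i) \<le> (\<Sum>i\<in>S. w i * cosh (a i))"
proof -
  have e1: "exp (\<Sum>i\<in>S. w i * a i) \<le> (\<Sum>i\<in>S. w i * exp (a i))"
    using convex_on_sum[OF assms(1,2) exp_convex assms(3), of a] assms(4) by simp
  have e2: "exp (\<Sum>i\<in>S. w i * (- a i)) \<le> (\<Sum>i\<in>S. w i * exp (- a i))"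
    using convex_on_sum[OF assms(1,2) exp_convex assms(3), of "\<lambda>i. - a i"] assms(4) by simp
  have "(\<Sum>i\<in>S. w i * (- a i)) = - (\<Sum>i\<in>S. w i * a i)" by (simp add: sum_negf)
  then have e2': "exp (- (\<Sum>i\<in>S. w i * a i)) \<le> (\<Sum>i\<in>S. w i * exp (- a i))" using e2 by simp
  have "cosh (\<Sum>i\<in>S. w i * a i) = (exp (\<Sum>i\<in>S. w i * a i) + exp (- (\<Sum>i\<in>S. w i * a i))) / 2"
    by (simp add: cosh_def)
  also have "\<dots> \<le> ((\<Sum>i\<in>S. w i * exp (a i)) + (\<Sum>i\<in>S. w i * exp (- a i))) / 2" using e1 e2' by simp
  also have "\<dots> = (\<Sum>i\<in>S. w i * cosh (a i))"
    by (simp add: cosh_def sum.distrib[symmetric] sum_divide_distrib distrib_left add_divide_distrib)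
  finally show ?thesis .
qed


lemma final_exp_ineq:
  fixes mt D c t :: real
  assumes mt: "0 \<le> mt" and D: "0 < D" and c: "0 < c" and t: "0 < t"
  defines "u \<equiv> t / (2 * (D + t * c / 3))"
  shows "u * mt + u\<^sup>2 * D * exp (u * c) / 2 - u * t \<le> - (t\<^sup>2 - 4 * mt * t) / (4 * (t * c / 3 + D))"
proof -
  define s where "s = t * c / 3"
  have s0: "0 \<le> s" unfolding s_def using c t by simp
  have Ds: "0 < D + s" using D s0 by simp
  have u0: "0 < u" unfolding u_def using t Ds s_def by simp
  have uc: "u * c = 3 * s / (2 * (D + s))" unfolding u_def s_def using Ds s_def by (simp add: field_simps)
  have eb: "D * exp (u * c) \<le> 2 * (D + s)" unfolding uc by (rule exp_bound_aux[OF D s0])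
  have "u * (D * exp (u * c)) \<le> u * (2 * (D + s))" using eb u0 by (intro mult_left_mono) auto
  also have "u * (2 * (D + s)) = t" unfolding u_def s_def using Ds s_def by (simp add: field_simps)
  finally have a: "u * (D * exp (u * c)) \<le> t" .
  have b: "u\<^sup>2 * D * exp (u * c) / 2 \<le> u * t / 2"
  proof -
    have "u\<^sup>2 * D * exp (u * c) = u * (u * (D * exp (u * c)))" by (simp add: power2_eq_square mult_ac)
    also have "\<dots> \<le> u * t" using a u0 by (intro mult_left_mono) auto
    finally show ?thesis by simp
  qed
  have key: "u * (2 * (D + s)) = t" unfolding u_def s_def using Ds s_def by (simp add: field_simps)
  have e1: "(- u * t / 2 + 2 * u * mt) * (4 * (D + s)) = - t * (u * (2 * (D + s))) + 4 * mt * (u * (2 * (D + s)))"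
    by (simp add: algebra_simps)
  have e2: "(- u * t / 2 + 2 * u * mt) * (4 * (D + s)) = - (t\<^sup>2 - 4 * mt * t)"
    unfolding e1 key by (simp add: power2_eq_square algebra_simps)
  have r: "- (t\<^sup>2 - 4 * mt * t) / (4 * (t * c / 3 + D)) = - u * t / 2 + 2 * u * mt"
  proof -
    have "t * c / 3 + D = D + s" unfolding s_def by simp
    then show ?thesis using e2 Ds by (simp add: divide_eq_eq add.commute)
  qed
  have "u * mt \<le> 2 * u * mt" using u0 mt by simp
  then show ?thesis unfolding r using b by linarith
qed

context LA3 begin

lemma main_bound:
  assumes n: "n = l * k + r" and l: "1 < l" and k: "1 < k" and r: "r < k" and Lam: "0 < Lam" and t: "0 < t"
  shows "measure M {\<omega> \<in> space M. t \<le> (1 / real n) * norm (\<Sum>i=1..n. X i \<omega>)}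
     \<le> 2 * exp (Lam * mt + Lam\<^sup>2 * BB * st2 * exp (Lam * c / l) / (2 * l) - Lam * t)"
proof -
  define L where "L j = (n - j) div k + 1" for j
  define S where "S \<omega> = (\<Sum>i=1..n. X i \<omega>)" for \<omega>
  have kn: "k \<le> n" using n l by (metis le_add1 le_trans less_imp_le_nat mult_le_mono1 mult_1 )
  have n0: "0 < n" using kn k by simp
  have Sdec: "S \<omega> = (\<Sum>j\<in>{1..k}. T j (L j) \<omega>)" for \<omega>
    unfolding S_def T_def L_def using sum_stride_reindex[of k n "\<lambda>i. X i \<omega>"] k kn by simp
  have sumL: "(\<Sum>j\<in>{1..k}. L j) = n"
    using sum_stride_reindex[of k n "\<lambda>i. 1::nat"] k kn unfolding L_def by simp
  have Lge: "l \<le> L j" if "j \<in> {1..k}" for j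
  proof -
    have jk: "j \<le> k" using that by simp
    have "l * k - k \<le> l * k - j" using jk by (rule diff_le_mono2)
    also have "\<dots> \<le> l * k + r - j" by (rule diff_le_mono) simp
    finally have "(l - 1) * k \<le> n - j" using n by (simp add: diff_mult_distrib)
    then have "(l - 1) * k div k \<le> (n - j) div k" by (rule div_le_mono)
    then have "l - 1 \<le> (n - j) div k" using k by simp
    then show ?thesis unfolding L_def by simp
  qed
  have Lpos: "0 < L j" for j unfolding L_def by simp
  define w where "w j = real (L j) / real n" for j
  have w1: "(\<Sum>j\<in>{1..k}. w j) = 1"
    unfolding w_def using sumL n0 by (simp add: sum_divide_distrib[symmetric] of_nat_sum[symmetric])
  have w0: "0 \<le> w j" for j unfolding w_def by simp
  define a where "a j \<omega> = (Lam / real (L j)) * norm (T j (L j) \<omega>)" for j \<omega>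
  define Z where "Z \<omega> = cosh (Lam * ((1 / real n) * norm (S \<omega>)))" for \<omega>
  have TM [measurable]: "T j p \<in> borel_measurable M" for j p unfolding T_def using meas by measurable
  have SM [measurable]: "S \<in> borel_measurable M" unfolding S_def using meas by measurable
  have ZM [measurable]: "Z \<in> borel_measurable M" unfolding Z_def by measurable
  have pw: "Z \<omega> \<le> (\<Sum>j\<in>{1..k}. w j * cosh (a j \<omega>))" if \<omega>: "\<omega> \<in> space M" for \<omega>
  proof -
    have "norm (S \<omega>) \<le> (\<Sum>j\<in>{1..k}. norm (T j (L j) \<omega>))" unfolding Sdec by (rule norm_sum)
    then have "Lam * ((1 / real n) * norm (S \<omega>)) \<le> Lam * ((1 / real n) * (\<Sum>j\<in>{1..k}. norm (T j (L j) \<omega>)))"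
      using Lam n0 by (intro mult_left_mono) auto
    also have "\<dots> = (\<Sum>j\<in>{1..k}. Lam * ((1 / real n) * norm (T j (L j) \<omega>)))"
      by (simp add: sum_distrib_left)
    also have "\<dots> = (\<Sum>j\<in>{1..k}. w j * a j \<omega>)"
    proof (intro sum.cong refl)
      fix j
      have "real (L j) \<noteq> 0" using Lpos[of j] by simp
      then show "Lam * ((1 / real n) * norm (T j (L j) \<omega>)) = w j * a j \<omega>"
        unfolding w_def a_def by (simp add: field_simps)
    qed
    finally have le: "Lam * ((1 / real n) * norm (S \<omega>)) \<le> (\<Sum>j\<in>{1..k}. w j * a j \<omega>)" .
    have "Z \<omega> \<le> cosh (\<Sum>j\<in>{1..k}. w j * a j \<omega>)"
    proof -
      have z0: "0 \<le> Lam * ((1 / real n) * norm (S \<omega>))" using Lam n0 by simp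
      then have "0 \<le> (\<Sum>j\<in>{1..k}. w j * a j \<omega>)" using le by linarith
      then show ?thesis unfolding Z_def using le z0 by (subst cosh_real_nonneg_le_iff) auto
    qed
    also have "\<dots> \<le> (\<Sum>j\<in>{1..k}. w j * cosh (a j \<omega>))"
      by (rule cosh_jensen) (use w1 w0 k in auto)
    finally show ?thesis .
  qed
  have Tb: "norm (T j (L j) \<omega>) \<le> real (L j) * c" if "j \<in> {1..k}" "\<omega> \<in> space M" for j \<omega>
    using T_bound[of j \<omega> "L j"] that by simp
  have int_a: "integrable M (\<lambda>\<omega>. cosh (a j \<omega>))" if "j \<in> {1..k}" for j
  proof (rule integrable_const_bound[where B="cosh (Lam * c)"])
    show "AE \<omega> in M. norm (cosh (a j \<omega>)) \<le> cosh (Lam * c)"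
    proof (intro AE_I2)
      fix \<omega> assume \<omega>: "\<omega> \<in> space M"
      have "a j \<omega> \<le> Lam / real (L j) * (real (L j) * c)"
        unfolding a_def using Tb[OF that \<omega>] Lam by (intro mult_left_mono) auto
      also have "\<dots> = Lam * c" using Lpos[of j] by simp
      finally have "a j \<omega> \<le> Lam * c" .
      moreover have "0 \<le> a j \<omega>" unfolding a_def using Lam by simp
      ultimately show "norm (cosh (a j \<omega>)) \<le> cosh (Lam * c)"
        using Lam c_pos by (simp add: cosh_real_nonneg_le_iff)
    qed
  qed (simp add: a_def)
  have intZ: "integrable M Z"
  proof (rule integrable_const_bound[where B="\<Sum>j\<in>{1..k}. w j * cosh (Lam * c)"])
    show "AE \<omega> in M. norm (Z \<omega>) \<le> (\<Sum>j\<in>{1..k}. w j * cosh (Lam * c))"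
    proof (intro AE_I2)
      fix \<omega> assume \<omega>: "\<omega> \<in> space M"
      have "Z \<omega> \<le> (\<Sum>j\<in>{1..k}. w j * cosh (a j \<omega>))" by (rule pw[OF \<omega>])
      also have "\<dots> \<le> (\<Sum>j\<in>{1..k}. w j * cosh (Lam * c))"
      proof (intro sum_mono mult_left_mono w0)
        fix j assume j: "j \<in> {1..k}"
        have "a j \<omega> \<le> Lam / real (L j) * (real (L j) * c)"
          unfolding a_def using Tb[OF j \<omega>] Lam by (intro mult_left_mono) auto
        also have "\<dots> = Lam * c" using Lpos[of j] by simp
        finally have "a j \<omega> \<le> Lam * c" .
        moreover have "0 \<le> a j \<omega>" unfolding a_def using Lam by simp
        ultimately show "cosh (a j \<omega>) \<le> cosh (Lam * c)" using Lam c_pos by (simp add: cosh_real_nonneg_le_iff)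
      qed
      finally show "norm (Z \<omega>) \<le> (\<Sum>j\<in>{1..k}. w j * cosh (Lam * c))" unfolding Z_def by simp
    qed
  qed simp
  define Psi where "Psi = Lam * mt + Lam\<^sup>2 * BB * st2 * exp (Lam * c / l) / (2 * l)"
  have Ea: "(\<integral>\<omega>. cosh (a j \<omega>) \<partial>M) \<le> exp Psi" if j: "j \<in> {1..k}" for j
  proof -
    let ?L = "real (L j)"
    let ?mu = "Lam / ?L"
    have Lp: "0 < ?L" using Lpos[of j] by simp
    have lL: "real l \<le> ?L" using Lge[OF j] by simp
    have l0: "0 < real l" using l by simp
    have mu0: "0 \<le> ?mu" using Lam Lp by simp
    have "(\<integral>\<omega>. cosh (a j \<omega>) \<partial>M) \<le> rho ?mu ^ L j"
      unfolding a_def using stride[of j ?mu "L j"] j mu0 by simp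
    also have "\<dots> \<le> exp (rho ?mu - 1) ^ L j"
      using rho_nonneg[OF mu0] by (intro power_mono) (auto simp: exp_ge_add_one_self[of "rho ?mu - 1", simplified])
    also have "\<dots> = exp (?L * (rho ?mu - 1))" by (simp add: exp_of_nat_mult)
    also have "?L * (rho ?mu - 1) = Lam * mt + Lam\<^sup>2 * BB * st2 * (exp (Lam * c / ?L) / ?L) / 2"
      unfolding rho_def using Lp by (simp add: field_simps power2_eq_square)
    also have "\<dots> \<le> Lam * mt + Lam\<^sup>2 * BB * st2 * (exp (Lam * c / l) / l) / 2"
    proof -
      have "Lam * c / ?L \<le> Lam * c / l" using Lam c_pos lL l0 by (intro divide_left_mono) auto
      then have "exp (Lam * c / ?L) \<le> exp (Lam * c / l)" by simp
      moreover have "1 / ?L \<le> 1 / l" using lL l0 by (intro divide_left_mono) auto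
      ultimately have "exp (Lam * c / ?L) / ?L \<le> exp (Lam * c / l) / l"
        using Lp l0 by (metis frac_le exp_ge_zero divide_left_mono frac_le lL)
      moreover have "0 \<le> Lam\<^sup>2 * BB * st2" using BB_ge1 st2_pos by simp
      ultimately have "Lam\<^sup>2 * BB * st2 * (exp (Lam * c / ?L) / ?L) \<le> Lam\<^sup>2 * BB * st2 * (exp (Lam * c / l) / l)"
        by (intro mult_left_mono)
      then show ?thesis by (intro add_left_mono divide_right_mono) auto
    qed
    also have "\<dots> = Psi" unfolding Psi_def by (simp add: field_simps)
    finally show ?thesis by simp
  qed
  have EZ: "(\<integral>\<omega>. Z \<omega> \<partial>M) \<le> exp Psi"
  proof -
    have "(\<integral>\<omega>. Z \<omega> \<partial>M) \<le> (\<integral>\<omega>. (\<Sum>j\<in>{1..k}. w j * cosh (a j \<omega>)) \<partial>M)"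
      using intZ int_a pw by (intro integral_mono) auto
    also have "\<dots> = (\<Sum>j\<in>{1..k}. w j * (\<integral>\<omega>. cosh (a j \<omega>) \<partial>M))"
      using int_a by (simp add: Bochner_Integration.integral_sum)
    also have "\<dots> \<le> (\<Sum>j\<in>{1..k}. w j * exp Psi)"
      using Ea w0 by (intro sum_mono mult_left_mono) auto
    also have "\<dots> = exp Psi" using w1 by (simp add: sum_distrib_right[symmetric])
    finally show ?thesis .
  qed
  have tl: "0 < cosh (Lam * t)" by simp
  have sub: "{\<omega> \<in> space M. t \<le> (1 / real n) * norm (S \<omega>)} \<subseteq> {\<omega> \<in> space M. cosh (Lam * t) \<le> Z \<omega>}"
  proof safe
    fix \<omega> assume "\<omega> \<in> space M" "t \<le> (1 / real n) * norm (S \<omega>)"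
    then have h: "Lam * t \<le> Lam * ((1 / real n) * norm (S \<omega>))" using Lam by (intro mult_left_mono) auto
    show "cosh (Lam * t) \<le> Z \<omega>" unfolding Z_def using Lam t n0 h
      by (subst cosh_real_nonneg_le_iff) auto
  qed
  have "measure M {\<omega> \<in> space M. t \<le> (1 / real n) * norm (S \<omega>)} \<le> measure M {\<omega> \<in> space M. cosh (Lam * t) \<le> Z \<omega>}"
    using sub by (intro finite_measure_mono) measurable
  also have "\<dots> \<le> (\<integral>\<omega>. Z \<omega> \<partial>M) / cosh (Lam * t)"
    by (rule integral_Markov_inequality_measure[OF intZ sets.top]) (auto simp: Z_def intro: AE_I2)
  also have "\<dots> \<le> exp Psi / cosh (Lam * t)" using EZ tl by (intro divide_right_mono) auto
  also have "\<dots> \<le> 2 * exp (Psi - Lam * t)"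
  proof -
    have "exp (Lam * t) \<le> 2 * cosh (Lam * t)" by (simp add: cosh_def exp_minus)
    then have "exp Psi / cosh (Lam * t) \<le> exp Psi / (exp (Lam * t) / 2)"
      using tl by (intro divide_left_mono) auto
    also have "\<dots> = 2 * exp (Psi - Lam * t)" by (simp add: exp_diff)
    finally show ?thesis .
  qed
  finally show ?thesis unfolding S_def Psi_def by simp
qed

end

theorem lemmaA3:
  fixes M :: "'w measure"
    and X :: "nat \<Rightarrow> 'w \<Rightarrow> 'b::{banach, second_countable_topology}"
    and Cset :: "('b \<Rightarrow> real) set"
    and Cnorm :: "('b \<Rightarrow> real) \<Rightarrow> real"
    and c sigma2 A1 A2 C1 C2 :: real
    and n l k r :: nat
  assumes prob: "prob_space M"
    (* the process: measurable, values in X = B(c), centered *)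
    and meas: "\<And>i. X i \<in> borel_measurable M"
    and c_pos: "c > 0"
    and bounded: "\<And>i \<omega>. i \<ge> 1 \<Longrightarrow> \<omega> \<in> space M \<Longrightarrow> norm (X i \<omega>) \<le> c"
    and centered: "\<And>i. i \<ge> 1 \<Longrightarrow> (\<integral>\<omega>. X i \<omega> \<partial>M) = 0"
    (* the function class C: closed subspace of bounded functions on B(c) (sup norm) *)
    and C_supp: "\<And>f x. f \<in> Cset \<Longrightarrow> norm x > c \<Longrightarrow> f x = 0"
    and C_bdd: "\<And>f. f \<in> Cset \<Longrightarrow> bounded (f ` cball 0 c)"
    and C_borel: "\<And>f. f \<in> Cset \<Longrightarrow> f \<in> borel_measurable borel"
    and C_zero: "(\<lambda>x. 0) \<in> Cset"
    and C_add: "\<And>f g. f \<in> Cset \<Longrightarrow> g \<in> Cset \<Longrightarrow> (\<lambda>x. f x + g x) \<in> Cset"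
    and C_scale: "\<And>f a. f \<in> Cset \<Longrightarrow> (\<lambda>x. a * f x) \<in> Cset"
    and C_closed: "\<And>fs g. (\<forall>m. fs m \<in> Cset) \<Longrightarrow> (\<forall>x. norm x > c \<longrightarrow> g x = 0) \<Longrightarrow>
                     bounded (g ` cball 0 c) \<Longrightarrow>
                     (\<lambda>m. SUP x\<in>cball 0 c. \<bar>fs m x - g x\<bar>) \<longlonglongrightarrow> 0 \<Longrightarrow> g \<in> Cset"
    (* C is a seminorm on Cset *)
    and Cn_nonneg: "\<And>f. f \<in> Cset \<Longrightarrow> Cnorm f \<ge> 0"
    and Cn_add: "\<And>f g. f \<in> Cset \<Longrightarrow> g \<in> Cset \<Longrightarrow> Cnorm (\<lambda>x. f x + g x) \<le> Cnorm f + Cnorm g"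
    and Cn_scale: "\<And>f a. f \<in> Cset \<Longrightarrow> Cnorm (\<lambda>x. a * f x) = \<bar>a\<bar> * Cnorm f"
    (* A1 *)
    and A1_ge: "A1 \<ge> 1" and A2_pos: "A2 > 0"
    and A1_diff: "\<And>(x::'b) v. x \<noteq> 0 \<Longrightarrow> twice_gateaux_diff norm x v"
    and A1_d1: "\<And>(x::'b) v. x \<noteq> 0 \<Longrightarrow> \<bar>gateaux1 norm x v\<bar> \<le> A1 * norm v"
    and A1_d2: "\<And>(x::'b) v. x \<noteq> 0 \<Longrightarrow> \<bar>gateaux2 norm x v\<bar> \<le> A2 * (norm v)\<^sup>2 / norm x"
    (* A2 *)
    and sigma2_pos: "sigma2 > 0"
    and A2_var: "\<And>i. i \<ge> 1 \<Longrightarrow> (\<integral>\<omega>. (norm (X i \<omega>))\<^sup>2 \<partial>M) \<le> sigma2"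
    (* A3 *)
    and C1_nonneg: "C1 \<ge> 0" and C2_nonneg: "C2 \<ge> 0"
    and A3_lin: "\<And>s. bounded_linear s \<Longrightarrow> (\<lambda>x. if norm x \<le> c then s x else 0) \<in> Cset"
    and A3_lin_bd: "\<And>s. bounded_linear s \<Longrightarrow> onorm s \<le> 1 \<Longrightarrow>
                      Cnorm (\<lambda>x. if norm x \<le> c then s x else 0) \<le> C1"
    and A3_sq: "(\<lambda>x. if norm x \<le> c then (norm x)\<^sup>2 else 0) \<in> Cset"
    and A3_sq_bd: "Cnorm (\<lambda>x. if norm x \<le> c then (norm x)\<^sup>2 else 0) \<le> C2"
    (* block decomposition *)
    and n_def: "n = l * k + r" and l_gt: "l > 1" and k_gt: "k > 1" and r_lt: "r < k"
    (* the mixing coefficient is finite *)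
    and Phi_fin: "C_mixing_coeff M X Cset Cnorm k \<noteq> \<infinity>"
  shows "let Phi = real_of_ereal (C_mixing_coeff M X Cset Cnorm k);
             mt = C1 * A1 * Phi; st2 = sigma2 + C2 * Phi; B = A1\<^sup>2 + A2 in
         (\<forall>t>0. \<P>(\<omega> in M. (1 / real n) * norm (\<Sum>i=1..n. X i \<omega>) \<ge> t)
                 \<le> 2 * exp (- (real l * (t\<^sup>2 - 4 * mt * t)) / (4 * (t * c / 3 + st2 * B)))) \<and>
         (\<forall>\<nu>>0. \<P>(\<omega> in M. norm ((1 / real n) *\<^sub>R (\<Sum>i=1..n. X i \<omega>))
                   \<ge> 4 * mt + 4 * sqrt (B * st2 * \<nu> / real l) + 4 / 3 * (c * \<nu> / real l))
                 \<le> 2 * exp (- \<nu>))"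
proof -
  interpret L: LA3 M X Cset Cnorm c sigma2 A1 A2 C1 C2 k
    by (intro LA3.intro LA3_axioms.intro prob) (rule assms; assumption?)+
  have l0: "0 < real l" using l_gt by simp
  have D0: "0 < L.st2 * L.BB" using L.st2_pos L.BB_ge1 by simp
  have part1: "\<forall>t>0. \<P>(\<omega> in M. (1 / real n) * norm (\<Sum>i=1..n. X i \<omega>) \<ge> t)
       \<le> 2 * exp (- (real l * (t\<^sup>2 - 4 * L.mt * t)) / (4 * (t * c / 3 + L.st2 * L.BB)))"
  proof (intro allI impI)
    fix t :: real assume t: "0 < t"
    define D where "D = L.st2 * L.BB"
    have D0': "0 < D" unfolding D_def using D0 .
    define u where "u = t / (2 * (D + t * c / 3))"
    have Dt: "0 < D + t * c / 3" using t D0' c_pos by (simp add: add_pos_nonneg)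
    have u0: "0 < u" unfolding u_def using t Dt by simp
    have lam: "0 < u * real l" using u0 l0 by simp
    have mb: "\<P>(\<omega> in M. (1 / real n) * norm (\<Sum>i=1..n. X i \<omega>) \<ge> t)
      \<le> 2 * exp ((u * real l) * L.mt + (u * real l)\<^sup>2 * L.BB * L.st2 * exp ((u * real l) * c / real l) / (2 * real l) - (u * real l) * t)"
      using L.main_bound[OF n_def l_gt k_gt r_lt lam t] by simp
    have ex: "(u * real l) * L.mt + (u * real l)\<^sup>2 * L.BB * L.st2 * exp ((u * real l) * c / real l) / (2 * real l) - (u * real l) * t
        = real l * (u * L.mt + u\<^sup>2 * D * exp (u * c) / 2 - u * t)"
      unfolding D_def using l0 by (simp add: field_simps power2_eq_square)
    have fe: "u * L.mt + u\<^sup>2 * D * exp (u * c) / 2 - u * t \<le> - (t\<^sup>2 - 4 * L.mt * t) / (4 * (t * c / 3 + D))"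
      unfolding u_def by (rule final_exp_ineq[OF L.mt_nonneg D0' c_pos t])
    have "real l * (u * L.mt + u\<^sup>2 * D * exp (u * c) / 2 - u * t) \<le> real l * (- (t\<^sup>2 - 4 * L.mt * t) / (4 * (t * c / 3 + D)))"
      using fe l0 by (intro mult_left_mono) auto
    also have "\<dots> = - (real l * (t\<^sup>2 - 4 * L.mt * t)) / (4 * (t * c / 3 + D))" by (simp add: minus_divide_left[symmetric] algebra_simps)
    finally have ineq: "real l * (u * L.mt + u\<^sup>2 * D * exp (u * c) / 2 - u * t) \<le> - (real l * (t\<^sup>2 - 4 * L.mt * t)) / (4 * (t * c / 3 + D))" .
    have "exp (real l * (u * L.mt + u\<^sup>2 * D * exp (u * c) / 2 - u * t)) \<le> exp (- (real l * (t\<^sup>2 - 4 * L.mt * t)) / (4 * (t * c / 3 + D)))"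
      using ineq by (simp only: exp_le_cancel_iff)
    moreover have "\<P>(\<omega> in M. (1 / real n) * norm (\<Sum>i=1..n. X i \<omega>) \<ge> t) \<le> 2 * exp (real l * (u * L.mt + u\<^sup>2 * D * exp (u * c) / 2 - u * t))"
      using mb unfolding ex .
    ultimately show "\<P>(\<omega> in M. (1 / real n) * norm (\<Sum>i=1..n. X i \<omega>) \<ge> t)
       \<le> 2 * exp (- (real l * (t\<^sup>2 - 4 * L.mt * t)) / (4 * (t * c / 3 + L.st2 * L.BB)))"
      unfolding D_def by linarith
  qed
  have part2: "\<forall>\<nu>>0. \<P>(\<omega> in M. norm ((1 / real n) *\<^sub>R (\<Sum>i=1..n. X i \<omega>))
                   \<ge> 4 * L.mt + 4 * sqrt (L.BB * L.st2 * \<nu> / real l) + 4 / 3 * (c * \<nu> / real l))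
                 \<le> 2 * exp (- \<nu>)"
  proof (intro allI impI)
    fix \<nu> :: real assume nu: "0 < \<nu>"
    define D where "D = L.BB * L.st2"
    have D0': "0 < D" unfolding D_def using D0 by (simp add: mult.commute)
    define \<rho> where "\<rho> = sqrt (D * \<nu> / real l)"
    define t0 where "t0 = 4 * L.mt + 4 * \<rho> + 4 / 3 * (c * \<nu> / real l)"
    have \<rho>0: "0 \<le> \<rho>" unfolding \<rho>_def using D0' nu l0 by simp
    have \<rho>sq: "real l * \<rho> * \<rho> = D * \<nu>"
    proof -
      have "\<rho> * \<rho> = D * \<nu> / real l" unfolding \<rho>_def using D0' nu l0 by simp
      then show ?thesis using l0 by (simp add: field_simps)
    qed
    have cnl: "0 < c * \<nu> / real l" using c_pos nu l0 by simp
    have cnl2: "0 < 4 / 3 * (c * \<nu> / real l)" using cnl by (intro mult_pos_pos) auto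
    have t0p: "0 < t0" unfolding t0_def using L.mt_nonneg \<rho>0 cnl2 by linarith
    have t0r: "4 * \<rho> \<le> t0" unfolding t0_def using L.mt_nonneg cnl2 by linarith
    have eqset: "{\<omega> \<in> space M. norm ((1 / real n) *\<^sub>R (\<Sum>i=1..n. X i \<omega>)) \<ge> t0}
        = {\<omega> \<in> space M. (1 / real n) * norm (\<Sum>i=1..n. X i \<omega>) \<ge> t0}" by simp
    have p1: "\<P>(\<omega> in M. (1 / real n) * norm (\<Sum>i=1..n. X i \<omega>) \<ge> t0)
       \<le> 2 * exp (- (real l * (t0\<^sup>2 - 4 * L.mt * t0)) / (4 * (t0 * c / 3 + D)))"
      using part1[rule_format, OF t0p] unfolding D_def by (simp only: mult.commute[of "L.st2" "L.BB"])
    have key: "4 * \<nu> * (t0 * c / 3 + D) \<le> real l * (t0\<^sup>2 - 4 * L.mt * t0)"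
    proof -
      have e: "real l * (t0\<^sup>2 - 4 * L.mt * t0) = 4 * (real l * t0 * \<rho>) + 4 / 3 * c * \<nu> * t0"
        unfolding t0_def using l0 by (simp add: field_simps power2_eq_square)
      have "real l * (4 * \<rho>) * \<rho> \<le> real l * t0 * \<rho>"
        using t0r l0 \<rho>0 by (intro mult_right_mono mult_left_mono) auto
      then have "4 * (D * \<nu>) \<le> real l * t0 * \<rho>" using \<rho>sq by (simp add: mult_ac)
      moreover have "0 \<le> D * \<nu>" using D0' nu by simp
      ultimately show ?thesis unfolding e by (simp add: algebra_simps)
    qed
    have "0 < t0 * c / 3" using t0p c_pos by simp
    then have den: "0 < 4 * (t0 * c / 3 + D)" using D0' by (intro mult_pos_pos add_pos_pos) auto
    have "\<nu> \<le> (real l * (t0\<^sup>2 - 4 * L.mt * t0)) / (4 * (t0 * c / 3 + D))"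
    proof -
      have key': "\<nu> * (4 * (t0 * c / 3 + D)) \<le> real l * (t0\<^sup>2 - 4 * L.mt * t0)"
      proof -
        have "\<nu> * (4 * (t0 * c / 3 + D)) = 4 * \<nu> * (t0 * c / 3 + D)" by (simp only: mult_ac)
        then show ?thesis using key by (simp only:)
      qed
      show ?thesis by (subst pos_le_divide_eq[OF den]) (rule key')
    qed
    then have hn: "- ((real l * (t0\<^sup>2 - 4 * L.mt * t0)) / (4 * (t0 * c / 3 + D))) \<le> - \<nu>" by linarith
    have neg: "- ((real l * (t0\<^sup>2 - 4 * L.mt * t0)) / (4 * (t0 * c / 3 + D))) = - (real l * (t0\<^sup>2 - 4 * L.mt * t0)) / (4 * (t0 * c / 3 + D))"
      by (rule minus_divide_left)
    have ex: "exp (- (real l * (t0\<^sup>2 - 4 * L.mt * t0)) / (4 * (t0 * c / 3 + D))) \<le> exp (- \<nu>)"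
      using hn unfolding neg by (simp only: exp_le_cancel_iff)
    have "\<P>(\<omega> in M. norm ((1 / real n) *\<^sub>R (\<Sum>i=1..n. X i \<omega>)) \<ge> t0) = \<P>(\<omega> in M. (1 / real n) * norm (\<Sum>i=1..n. X i \<omega>) \<ge> t0)"
      using eqset by simp
    also have "\<dots> \<le> 2 * exp (- (real l * (t0\<^sup>2 - 4 * L.mt * t0)) / (4 * (t0 * c / 3 + D)))" by (rule p1)
    also have "\<dots> \<le> 2 * exp (- \<nu>)" using ex by simp
    finally have goal: "\<P>(\<omega> in M. norm ((1 / real n) *\<^sub>R (\<Sum>i=1..n. X i \<omega>)) \<ge> t0) \<le> 2 * exp (- \<nu>)" .
    then show "\<P>(\<omega> in M. norm ((1 / real n) *\<^sub>R (\<Sum>i=1..n. X i \<omega>))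
                   \<ge> 4 * L.mt + 4 * sqrt (L.BB * L.st2 * \<nu> / real l) + 4 / 3 * (c * \<nu> / real l))
                 \<le> 2 * exp (- \<nu>)"
      by (simp only: t0_def \<rho>_def D_def)
  qed
  show ?thesis
    unfolding Let_def L.Phi_def[symmetric] L.mt_def[symmetric] L.st2_def[symmetric] L.BB_def[symmetric]
    using part1 part2 by blast
qed


end
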